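(* Let $\mathcal E$ be a nonlinear Dirichlet form on $L^2(\mu)$. The following are equivalent: (i) $\ker\|\cdot\|_{L_e}=\{0\}$; (ii) $(M(\mathcal E_e),\|\cdot\|_{L_e})$ is a Banach space; (iii) the embedding $(M(\mathcal E_e),\|\cdot\|_{L_e})\to L^0(\mu)$, $f\mapsto f$, is continuous; (iv) for one (equivalently, for all) integrable $w\colon X\to(0,\infty)$ and one (equivalently, all) $1\le p<\infty$ there exists a decreasing function $\alpha\colon(0,\infty)\to(0,\infty)$ such that for all $r>0$ and all $f\in M(\mathcal E_e)\cap L^\infty(\mu)$: $\left(\int_X|f|^pw\,d\mu\right)^{1/p}\le\alpha(r)\|f\|_{L_e}+r\|f\|_\infty$.
   Context: $(X,\mathfrak A,\mu)$ is $\sigma$-finite; $L^0(\mu)$ carries the topology of local convergence in measure. A nonlinear Dirichlet form is a lower semicontinuous convex $\mathcal E\colon L^2(\mu)\to[0,\infty]$ with $\mathcal E(-f)=\mathcal E(f)$, $\mathcal E(0)=0$, such that $\mathcal E(f+Cg)+\mathcal E(f-Cg)\le\mathcal E(f+g)+\mathcal E(f-g)$ for all $f,g$ and every 1-Lipschitz $C\colon\mathbb R\to\mathbb R$ with $C(0)=0$. $\mathcal E_e$ is the lower semicontinuous relaxation on $L^0(\mu)$ (w.r.t. local convergence in measure) of $\mathcal E$ extended by $+\infty$ outside $L^2(\mu)$ (it exists for such $\mathcal E$); $M(\mathcal E_e)=\{f\in L^0:\lim_{\lambda\to0+}\mathcal E_e(\lambda f)=0\}$, $\|f\|_{L_e}=\inf\{\lambda>0:\mathcal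 E_e(\lambda^{-1}f)\le1\}$. *)

theory Defs
  imports "HOL-Analysis.Analysis" "HOL-Probability.Essential_Supremum"
begin

text \<open>Elements of L^0, L^2, L^infinity are represented by real-valued measurable
  functions; equality in these spaces is equality almost everywhere.\<close>

definition L2 :: "'a measure \<Rightarrow> ('a \<Rightarrow> real) set" where
  "L2 M = {f. f \<in> borel_measurable M \<and> integrable M (\<lambda>x. (f x)\<^sup>2)}"

definition Linf :: "'a measure \<Rightarrow> ('a \<Rightarrow> real) set" where
  "Linf M = {f. f \<in> borel_measurable M \<and> (\<exists>C. AE x in M. \<bar>f x\<bar> \<le> C)}"

definition sup_norm :: "'a measure \<Rightarrow> ('a \<Rightarrow> real) \<Rightarrow> real" where
  "sup_norm M f = real_of_ereal (esssup M (\<lambda>x. ereal \<bar>f x\<bar>))"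

definition loc_conv_in_measure :: "'a measure \<Rightarrow> (nat \<Rightarrow> 'a \<Rightarrow> real) \<Rightarrow> ('a \<Rightarrow> real) \<Rightarrow> bool" where
  "loc_conv_in_measure M g f \<longleftrightarrow>
     (\<forall>A \<in> sets M. emeasure M A < \<infinity> \<longrightarrow>
        (\<forall>\<epsilon>>0. (\<lambda>n. emeasure M ({x \<in> space M. \<epsilon> < \<bar>g n x - f x\<bar>} \<inter> A)) \<longlonglongrightarrow> 0))"

text \<open>Nonlinear Dirichlet form on L^2(M); the functional is given on functions and
  only its values on L2 M matter.\<close>
definition nonlinear_dirichlet_form :: "'a measure \<Rightarrow> (('a \<Rightarrow> real) \<Rightarrow> ennreal) \<Rightarrow> bool" where
  "nonlinear_dirichlet_form M E \<longleftrightarrow>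
     \<comment> \<open>well defined on equivalence classes\<close>
     (\<forall>f \<in> L2 M. \<forall>g \<in> L2 M. (AE x in M. f x = g x) \<longrightarrow> E f = E g) \<and>
     \<comment> \<open>lower semicontinuous w.r.t. the L2 norm\<close>
     (\<forall>u f. (\<forall>n. u n \<in> L2 M) \<and> f \<in> L2 M \<and>
        (\<lambda>n. integral\<^sup>L M (\<lambda>x. (u n x - f x)\<^sup>2)) \<longlonglongrightarrow> 0 \<longrightarrow>
        E f \<le> liminf (\<lambda>n. E (u n))) \<and>
     \<comment> \<open>convex\<close>
     (\<forall>f \<in> L2 M. \<forall>g \<in> L2 M. \<forall>t::real. 0 \<le> t \<and> t \<le> 1 \<longrightarrow>
        E (\<lambda>x. t * f x + (1 - t) * g x) \<le> ennreal t * E f + ennreal (1 - t) * E g) \<and>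
     \<comment> \<open>symmetric, vanishing at 0\<close>
     (\<forall>f \<in> L2 M. E (\<lambda>x. - f x) = E f) \<and>
     E (\<lambda>x. 0) = 0 \<and>
     \<comment> \<open>contraction property for normal contractions\<close>
     (\<forall>f \<in> L2 M. \<forall>g \<in> L2 M. \<forall>C :: real \<Rightarrow> real.
        (\<forall>s t. \<bar>C s - C t\<bar> \<le> \<bar>s - t\<bar>) \<and> C 0 = 0 \<longrightarrow>
        E (\<lambda>x. f x + C (g x)) + E (\<lambda>x. f x - C (g x))
          \<le> E (\<lambda>x. f x + g x) + E (\<lambda>x. f x - g x))"

definition E_ext :: "'a measure \<Rightarrow> (('a \<Rightarrow> real) \<Rightarrow> ennreal) \<Rightarrow> ('a \<Rightarrow> real) \<Rightarrow> ennreal" where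
  "E_ext M E f = (if f \<in> L2 M then E f else \<infinity>)"

text \<open>Lower semicontinuous relaxation on L^0 w.r.t. local convergence in measure.
  Since M is sigma-finite this topology is metrizable, so the relaxation is
  the sequential one.\<close>
definition E_e :: "'a measure \<Rightarrow> (('a \<Rightarrow> real) \<Rightarrow> ennreal) \<Rightarrow> ('a \<Rightarrow> real) \<Rightarrow> ennreal" where
  "E_e M E f = Inf {liminf (\<lambda>n. E_ext M E (g n)) | g.
      (\<forall>n. g n \<in> borel_measurable M) \<and> loc_conv_in_measure M g f}"

definition ME :: "'a measure \<Rightarrow> (('a \<Rightarrow> real) \<Rightarrow> ennreal) \<Rightarrow> ('a \<Rightarrow> real) set" where
  "ME M E = {f. f \<in> borel_measurable M \<and>
      ((\<lambda>l::real. E_e M E (\<lambda>x. l * f x)) \<longlongrightarrow> 0) (at_right 0)}"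

definition Le_norm :: "'a measure \<Rightarrow> (('a \<Rightarrow> real) \<Rightarrow> ennreal) \<Rightarrow> ('a \<Rightarrow> real) \<Rightarrow> real" where
  "Le_norm M E f = Inf {l::real. l > 0 \<and> E_e M E (\<lambda>x. f x / l) \<le> 1}"

definition trivial_kernel :: "'a measure \<Rightarrow> (('a \<Rightarrow> real) \<Rightarrow> ennreal) \<Rightarrow> bool" where
  "trivial_kernel M E \<longleftrightarrow> (\<forall>f \<in> ME M E. Le_norm M E f = 0 \<longrightarrow> (AE x in M. f x = 0))"

definition is_banach :: "'a measure \<Rightarrow> (('a \<Rightarrow> real) \<Rightarrow> ennreal) \<Rightarrow> bool" where
  "is_banach M E \<longleftrightarrow>
     (let S = ME M E; N = Le_norm M E in
       (\<forall>f \<in> S. \<forall>g \<in> S. (\<lambda>x. f x + g x) \<in> S \<and> N (\<lambda>x. f x + g x) \<le> N f + N g) \<and>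
       (\<forall>f \<in> S. \<forall>c::real. (\<lambda>x. c * f x) \<in> S \<and> N (\<lambda>x. c * f x) = \<bar>c\<bar> * N f) \<and>
       (\<forall>f \<in> S. N f = 0 \<longrightarrow> (AE x in M. f x = 0)) \<and>
       (\<forall>u. (\<forall>n. u n \<in> S) \<and>
          (\<forall>\<epsilon>>0. \<exists>K. \<forall>m\<ge>K. \<forall>n\<ge>K. N (\<lambda>x. u m x - u n x) < \<epsilon>) \<longrightarrow>
          (\<exists>f \<in> S. (\<lambda>n. N (\<lambda>x. u n x - f x)) \<longlonglongrightarrow> 0)))"

text \<open>(iii) continuity of the embedding into L^0 (the domain is pseudometrizable,
  so sequential continuity is continuity).\<close>
definition embedding_continuous :: "'a measure \<Rightarrow> (('a \<Rightarrow> real) \<Rightarrow> ennreal) \<Rightarrow> bool" where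
  "embedding_continuous M E \<longleftrightarrow>
     (\<forall>u f. (\<forall>n. u n \<in> ME M E) \<and> f \<in> ME M E \<and>
        (\<lambda>n. Le_norm M E (\<lambda>x. u n x - f x)) \<longlonglongrightarrow> 0 \<longrightarrow> loc_conv_in_measure M u f)"

definition admissible_weight :: "'a measure \<Rightarrow> ('a \<Rightarrow> real) \<Rightarrow> bool" where
  "admissible_weight M w \<longleftrightarrow> integrable M w \<and> (\<forall>x \<in> space M. 0 < w x)"

definition weighted_estimate :: "'a measure \<Rightarrow> (('a \<Rightarrow> real) \<Rightarrow> ennreal) \<Rightarrow> ('a \<Rightarrow> real) \<Rightarrow> real \<Rightarrow> bool" where
  "weighted_estimate M E w p \<longleftrightarrow>
     (\<exists>\<alpha> :: real \<Rightarrow> real.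
        (\<forall>r>0. 0 < \<alpha> r) \<and> (\<forall>r s. 0 < r \<and> r \<le> s \<longrightarrow> \<alpha> s \<le> \<alpha> r) \<and>
        (\<forall>r>0. \<forall>f \<in> ME M E \<inter> Linf M.
           (integral\<^sup>L M (\<lambda>x. \<bar>f x\<bar> powr p * w x)) powr (1 / p)
             \<le> \<alpha> r * Le_norm M E f + r * sup_norm M f))"

end

theory Submission
  imports Defs
begin

lemma lc_zero: "loc_conv_in_measure M (\<lambda>n x. 0) (\<lambda>x. 0)"
  unfolding loc_conv_in_measure_def by auto

lemma lc_const: "loc_conv_in_measure M (\<lambda>n. f) f"
  unfolding loc_conv_in_measure_def by auto

lemma lc_bound:
  assumes g: "loc_conv_in_measure M g f" and h: "loc_conv_in_measure M h k"
    and mg: "\<And>n. g n \<in> borel_measurable M" and mf: "f \<in> borel_measurable M"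
    and mh: "\<And>n. h n \<in> borel_measurable M" and mk: "k \<in> borel_measurable M"
    and bd: "\<And>n x. x \<in> space M \<Longrightarrow> \<bar>u n x - v x\<bar> \<le> \<bar>g n x - f x\<bar> + \<bar>h n x - k x\<bar>"
  shows "loc_conv_in_measure M u v"
  unfolding loc_conv_in_measure_def
proof (intro ballI impI allI)
  fix A \<epsilon> assume A: "A \<in> sets M" "emeasure M A < \<infinity>" and e: "(0::real) < \<epsilon>"
  define B where "B n = {x \<in> space M. \<epsilon>/2 < \<bar>g n x - f x\<bar>} \<inter> A" for n
  define C where "C n = {x \<in> space M. \<epsilon>/2 < \<bar>h n x - k x\<bar>} \<inter> A" for n
  have e2: "0 < \<epsilon>/2" using e by simp
  have gA: "\<forall>\<delta>>0. (\<lambda>n. emeasure M ({x \<in> space M. \<delta> < \<bar>g n x - f x\<bar>} \<inter> A)) \<longlonglongrightarrow> 0"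
    using g[unfolded loc_conv_in_measure_def, rule_format, OF A(1) A(2)] by blast
  have hA: "\<forall>\<delta>>0. (\<lambda>n. emeasure M ({x \<in> space M. \<delta> < \<bar>h n x - k x\<bar>} \<inter> A)) \<longlonglongrightarrow> 0"
    using h[unfolded loc_conv_in_measure_def, rule_format, OF A(1) A(2)] by blast
  have B: "(\<lambda>n. emeasure M (B n)) \<longlonglongrightarrow> 0" unfolding B_def by (rule gA[rule_format, OF e2])
  have C: "(\<lambda>n. emeasure M (C n)) \<longlonglongrightarrow> 0" unfolding C_def by (rule hA[rule_format, OF e2])
  have BC: "B n \<in> sets M" "C n \<in> sets M" for n
    unfolding B_def C_def using A mg mf mh mk by auto
  have le: "emeasure M ({x \<in> space M. \<epsilon> < \<bar>u n x - v x\<bar>} \<inter> A) \<le> emeasure M (B n) + emeasure M (C n)" for n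
  proof -
    have "{x \<in> space M. \<epsilon> < \<bar>u n x - v x\<bar>} \<inter> A \<subseteq> B n \<union> C n"
    proof
      fix x assume x: "x \<in> {x \<in> space M. \<epsilon> < \<bar>u n x - v x\<bar>} \<inter> A"
      then have "\<epsilon> < \<bar>g n x - f x\<bar> + \<bar>h n x - k x\<bar>" using bd[of x n] by auto
      then have "\<epsilon>/2 < \<bar>g n x - f x\<bar> \<or> \<epsilon>/2 < \<bar>h n x - k x\<bar>" by linarith
      then show "x \<in> B n \<union> C n" using x unfolding B_def C_def by auto
    qed
    then have "emeasure M ({x \<in> space M. \<epsilon> < \<bar>u n x - v x\<bar>} \<inter> A) \<le> emeasure M (B n \<union> C n)"
      by (intro emeasure_mono) (use BC in auto)
    also have "\<dots> \<le> emeasure M (B n) + emeasure M (C n)"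
      by (intro emeasure_subadditive BC)
    finally show ?thesis .
  qed
  have "(\<lambda>n. emeasure M (B n) + emeasure M (C n)) \<longlonglongrightarrow> 0 + 0"
    by (intro tendsto_add B C)
  then have lim: "(\<lambda>n. emeasure M (B n) + emeasure M (C n)) \<longlonglongrightarrow> 0" by simp
  have ev1: "eventually (\<lambda>n. (0::ennreal) \<le> emeasure M ({x \<in> space M. \<epsilon> < \<bar>u n x - v x\<bar>} \<inter> A)) sequentially"
    by simp
  have ev2: "eventually (\<lambda>n. emeasure M ({x \<in> space M. \<epsilon> < \<bar>u n x - v x\<bar>} \<inter> A) \<le> emeasure M (B n) + emeasure M (C n)) sequentially"
    using le by simp
  show "(\<lambda>n. emeasure M ({x \<in> space M. \<epsilon> < \<bar>u n x - v x\<bar>} \<inter> A)) \<longlonglongrightarrow> 0"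
    by (rule tendsto_sandwich[OF ev1 ev2 tendsto_const lim])
qed

lemma lc_single:
  assumes g: "loc_conv_in_measure M g f"
    and mg: "\<And>n. g n \<in> borel_measurable M" and mf: "f \<in> borel_measurable M"
    and bd: "\<And>n x. x \<in> space M \<Longrightarrow> \<bar>u n x - v x\<bar> \<le> \<bar>g n x - f x\<bar>"
  shows "loc_conv_in_measure M u v"
  by (rule lc_bound[OF g lc_zero mg mf]) (use bd in auto)

lemma lc_subseq:
  assumes "loc_conv_in_measure M g f" "strict_mono r"
  shows "loc_conv_in_measure M (\<lambda>n. g (r n)) f"
  using assms unfolding loc_conv_in_measure_def
  by (auto intro: LIMSEQ_subseq_LIMSEQ[unfolded comp_def])

lemma lc_shift:
  assumes "loc_conv_in_measure M g f"
  shows "loc_conv_in_measure M (\<lambda>n. g (n + k)) f"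
  using assms unfolding loc_conv_in_measure_def
  by (auto intro: LIMSEQ_ignore_initial_segment)

lemma lc_AE:
  assumes mg: "\<And>n. g n \<in> borel_measurable M" and mf: "f \<in> borel_measurable M"
    and ae: "AE x in M. (\<lambda>n. g n x) \<longlonglongrightarrow> f x"
  shows "loc_conv_in_measure M g f"
  unfolding loc_conv_in_measure_def
proof (intro ballI impI allI)
  fix A \<epsilon> assume A: "A \<in> sets M" "emeasure M A < \<infinity>" and e: "(0::real) < \<epsilon>"
  define B where "B n = {x \<in> space M. \<epsilon> < \<bar>g n x - f x\<bar>} \<inter> A" for n
  define T where "T n = (\<Union>m\<in>{n..}. B m)" for n
  have Bs: "B n \<in> sets M" for n unfolding B_def using A mg mf by auto
  have Ts: "T n \<in> sets M" for n unfolding T_def using Bs by auto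
  have TA: "T n \<subseteq> A" for n unfolding T_def B_def by auto
  have dec: "decseq T" unfolding T_def decseq_def by (auto 0 3 intro: order_trans)
  have fin: "emeasure M (T n) \<noteq> \<infinity>" for n
  proof -
    have "emeasure M (T n) < \<infinity>" using emeasure_mono[OF TA A(1)] A(2) by (rule le_less_trans)
    then show ?thesis by simp
  qed
  have lim: "(\<lambda>n. emeasure M (T n)) \<longlonglongrightarrow> emeasure M (\<Inter>n. T n)"
    by (rule Lim_emeasure_decseq) (use Ts dec fin in auto)
  from ae obtain N where N: "N \<in> null_sets M" "{x \<in> space M. \<not> (\<lambda>n. g n x) \<longlonglongrightarrow> f x} \<subseteq> N"
    by (auto elim!: AE_E)
  have "(\<Inter>n. T n) \<subseteq> N"
  proof
    fix x assume x: "x \<in> (\<Inter>n. T n)"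
    then have xs: "x \<in> space M" unfolding T_def B_def by auto
    have "\<not> (\<lambda>n. g n x) \<longlonglongrightarrow> f x"
    proof
      assume "(\<lambda>n. g n x) \<longlonglongrightarrow> f x"
      then have "eventually (\<lambda>n. dist (g n x) (f x) < \<epsilon>) sequentially" using e
        by (simp add: tendsto_iff)
      then obtain n0 where n0: "\<And>n. n \<ge> n0 \<Longrightarrow> \<bar>g n x - f x\<bar> < \<epsilon>"
        by (auto simp: eventually_sequentially dist_real_def)
      from x have "x \<in> T n0" by auto
      then obtain m where "m \<ge> n0" "x \<in> B m" unfolding T_def by auto
      then show False using n0[of m] unfolding B_def by auto
    qed
    then show "x \<in> N" using N xs by auto
  qed
  then have "(\<Inter>n. T n) \<in> null_sets M"
    by (intro null_sets_subset[OF N(1)]) (use Ts in auto)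
  then have "emeasure M (\<Inter>n. T n) = 0" by auto
  with lim have T0: "(\<lambda>n. emeasure M (T n)) \<longlonglongrightarrow> 0" by simp
  have "emeasure M (B n) \<le> emeasure M (T n)" for n
    by (rule emeasure_mono) (auto simp: T_def Ts[unfolded T_def])
  then have ev2: "eventually (\<lambda>n. emeasure M (B n) \<le> emeasure M (T n)) sequentially" by simp
  have "(\<lambda>n. emeasure M (B n)) \<longlonglongrightarrow> 0"
    by (rule tendsto_sandwich[OF _ ev2 tendsto_const T0]) simp
  then show "(\<lambda>n. emeasure M ({x \<in> space M. \<epsilon> < \<bar>g n x - f x\<bar>} \<inter> A)) \<longlonglongrightarrow> 0"
    unfolding B_def by simp
qed


definition contr :: "(real \<Rightarrow> real) \<Rightarrow> bool" where
  "contr C \<longleftrightarrow> (\<forall>s t. \<bar>C s - C t\<bar> \<le> \<bar>s - t\<bar>) \<and> C 0 = 0"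

lemma contr_meas:
  assumes "contr C" "f \<in> borel_measurable M"
  shows "(\<lambda>x. C (f x)) \<in> borel_measurable M"
proof -
  have "1-lipschitz_on UNIV C"
    using assms(1) unfolding contr_def by (intro lipschitz_onI) (auto simp: dist_real_def)
  then have "continuous_on UNIV C" by (rule lipschitz_on_continuous_on)
  then have "C \<in> borel_measurable borel" by (rule borel_measurable_continuous_onI)
  then show ?thesis using assms(2) by (rule measurable_compose[rotated])
qed

lemma contr_abs_le: "contr C \<Longrightarrow> \<bar>C s\<bar> \<le> \<bar>s\<bar>"
  unfolding contr_def by (metis diff_zero)

lemma L2_cmult: "f \<in> L2 M \<Longrightarrow> (\<lambda>x. c * f x) \<in> L2 M"
  unfolding L2_def by (auto simp: power_mult_distrib intro: integrable_mult_right)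

lemma L2_add:
  assumes "f \<in> L2 M" "g \<in> L2 M"
  shows "(\<lambda>x. f x + g x) \<in> L2 M"
proof -
  have mf: "f \<in> borel_measurable M" and mg: "g \<in> borel_measurable M"
    and i: "integrable M (\<lambda>x. 2 * (f x)\<^sup>2 + 2 * (g x)\<^sup>2)"
    using assms unfolding L2_def by auto
  have "integrable M (\<lambda>x. (f x + g x)\<^sup>2)"
  proof (rule Bochner_Integration.integrable_bound[OF i])
    show "(\<lambda>x. (f x + g x)\<^sup>2) \<in> borel_measurable M" using mf mg by measurable
    show "AE x in M. norm ((f x + g x)\<^sup>2) \<le> norm (2 * (f x)\<^sup>2 + 2 * (g x)\<^sup>2)"
    proof (intro AE_I2)
      fix x
      have "0 \<le> (f x - g x)\<^sup>2" by simp
      moreover have "(f x + g x)\<^sup>2 = (f x)\<^sup>2 + 2 * f x * g x + (g x)\<^sup>2" by (simp add: power2_sum)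
      moreover have "(f x - g x)\<^sup>2 = (f x)\<^sup>2 - 2 * f x * g x + (g x)\<^sup>2" by (simp add: power2_diff)
      ultimately have h: "(f x + g x)\<^sup>2 \<le> 2 * (f x)\<^sup>2 + 2 * (g x)\<^sup>2" by linarith
      have n1: "norm ((f x + g x)\<^sup>2) = (f x + g x)\<^sup>2" by simp
      have n2: "norm (2 * (f x)\<^sup>2 + 2 * (g x)\<^sup>2) = 2 * (f x)\<^sup>2 + 2 * (g x)\<^sup>2"
        unfolding real_norm_def by (intro abs_of_nonneg) simp
      show "norm ((f x + g x)\<^sup>2) \<le> norm (2 * (f x)\<^sup>2 + 2 * (g x)\<^sup>2)"
        unfolding n1 n2 by (rule h)
    qed
  qed
  then show ?thesis using mf mg unfolding L2_def by auto
qed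

lemma L2_diff:
  assumes "f \<in> L2 M" "g \<in> L2 M"
  shows "(\<lambda>x. f x - g x) \<in> L2 M"
proof -
  have eq: "(\<lambda>x. f x - g x) = (\<lambda>x. f x + (-1) * g x)" by simp
  show ?thesis unfolding eq by (intro L2_add L2_cmult assms)
qed

lemma L2_contr:
  assumes "f \<in> L2 M" "contr C"
  shows "(\<lambda>x. C (f x)) \<in> L2 M"
proof -
  have mf: "f \<in> borel_measurable M" and i: "integrable M (\<lambda>x. (f x)\<^sup>2)"
    using assms unfolding L2_def by auto
  have m: "(\<lambda>x. C (f x)) \<in> borel_measurable M" by (rule contr_meas[OF assms(2) mf])
  have "integrable M (\<lambda>x. (C (f x))\<^sup>2)"
  proof (rule Bochner_Integration.integrable_bound[OF i])
    show "(\<lambda>x. (C (f x))\<^sup>2) \<in> borel_measurable M" using m by measurable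
    show "AE x in M. norm ((C (f x))\<^sup>2) \<le> norm ((f x)\<^sup>2)"
      using contr_abs_le[OF assms(2)] by (auto intro!: AE_I2 simp: abs_le_square_iff)
  qed
  then show ?thesis using m unfolding L2_def by auto
qed

lemma L2_zero: "(\<lambda>x. 0) \<in> L2 M" unfolding L2_def by simp

lemma L2_meas: "f \<in> L2 M \<Longrightarrow> f \<in> borel_measurable M" unfolding L2_def by auto

lemma ennreal_double_le: "(x::ennreal) + x \<le> y + y \<Longrightarrow> x \<le> y"
  by (meson add_strict_mono linorder_not_less)

context
  fixes M :: "'a measure" and E :: "('a \<Rightarrow> real) \<Rightarrow> ennreal"
  assumes D: "nonlinear_dirichlet_form M E"
begin

lemma D_convex: "\<forall>f \<in> L2 M. \<forall>g \<in> L2 M. \<forall>t::real. 0 \<le> t \<and> t \<le> 1 \<longrightarrow>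
        E (\<lambda>x. t * f x + (1 - t) * g x) \<le> ennreal t * E f + ennreal (1 - t) * E g"
  using D unfolding nonlinear_dirichlet_form_def by (elim conjE) assumption

lemma D_symm: "\<forall>f \<in> L2 M. E (\<lambda>x. - f x) = E f"
  using D unfolding nonlinear_dirichlet_form_def by (elim conjE) assumption

lemma E_zero: "E (\<lambda>x. 0) = 0"
  using D unfolding nonlinear_dirichlet_form_def by (elim conjE) assumption

lemma D_contr: "\<forall>f \<in> L2 M. \<forall>g \<in> L2 M. \<forall>C :: real \<Rightarrow> real.
        (\<forall>s t. \<bar>C s - C t\<bar> \<le> \<bar>s - t\<bar>) \<and> C 0 = 0 \<longrightarrow>
        E (\<lambda>x. f x + C (g x)) + E (\<lambda>x. f x - C (g x))
          \<le> E (\<lambda>x. f x + g x) + E (\<lambda>x. f x - g x)"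
  using D unfolding nonlinear_dirichlet_form_def by (elim conjE) assumption

lemma E_convex: "f \<in> L2 M \<Longrightarrow> g \<in> L2 M \<Longrightarrow> 0 \<le> t \<Longrightarrow> t \<le> 1 \<Longrightarrow>
   E (\<lambda>x. t * f x + (1 - t) * g x) \<le> ennreal t * E f + ennreal (1 - t) * E g"
  using D_convex by blast

lemma E_symm: "f \<in> L2 M \<Longrightarrow> E (\<lambda>x. - f x) = E f"
  using D_symm by blast

lemma E_contr0:
  assumes "f \<in> L2 M" "g \<in> L2 M" "contr C"
  shows "E (\<lambda>x. f x + C (g x)) + E (\<lambda>x. f x - C (g x)) \<le> E (\<lambda>x. f x + g x) + E (\<lambda>x. f x - g x)"
  using D_contr assms unfolding contr_def by blast

lemma E_contr:
  assumes "g \<in> L2 M" "contr C"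
  shows "E (\<lambda>x. C (g x)) \<le> E g"
proof -
  have "E (\<lambda>x. 0 + C (g x)) + E (\<lambda>x. 0 - C (g x)) \<le> E (\<lambda>x. 0 + g x) + E (\<lambda>x. 0 - g x)"
    by (rule E_contr0[OF L2_zero assms])
  then have "E (\<lambda>x. C (g x)) + E (\<lambda>x. - C (g x)) \<le> E g + E (\<lambda>x. - g x)" by simp
  moreover have e1: "E (\<lambda>x. - C (g x)) = E (\<lambda>x. C (g x))"
    by (rule E_symm[OF L2_contr[OF assms]])
  moreover have e2: "E (\<lambda>x. - g x) = E g" by (rule E_symm[OF assms(1)])
  ultimately have "E (\<lambda>x. C (g x)) + E (\<lambda>x. C (g x)) \<le> E g + E g" by (simp only:)
  then show ?thesis by (rule ennreal_double_le)
qed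

lemma E_max:
  assumes f: "f \<in> L2 M" and g: "g \<in> L2 M"
  shows "E (\<lambda>x. max (f x) (g x)) \<le> E f + E g"
proof -
  define u where "u = (\<lambda>x. (1/2) * f x + (1/2) * g x)"
  define v where "v = (\<lambda>x. (1/2) * f x - (1/2) * g x)"
  have u: "u \<in> L2 M" unfolding u_def by (intro L2_add L2_cmult f g)
  have v: "v \<in> L2 M" unfolding v_def by (intro L2_diff L2_cmult f g)
  have c: "contr abs" unfolding contr_def by auto
  have "E (\<lambda>x. u x + \<bar>v x\<bar>) + E (\<lambda>x. u x - \<bar>v x\<bar>) \<le> E (\<lambda>x. u x + v x) + E (\<lambda>x. u x - v x)"
    by (rule E_contr0[OF u v c])
  moreover have e1: "(\<lambda>x. u x + \<bar>v x\<bar>) = (\<lambda>x. max (f x) (g x))"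
  proof (rule ext)
    fix x show "u x + \<bar>v x\<bar> = max (f x) (g x)" unfolding u_def v_def max_def by (simp add: abs_if)
  qed
  moreover have e2: "(\<lambda>x. u x + v x) = f" "(\<lambda>x. u x - v x) = g"
    unfolding u_def v_def by (rule ext, simp)+
  ultimately have "E (\<lambda>x. max (f x) (g x)) + E (\<lambda>x. u x - \<bar>v x\<bar>) \<le> E f + E g"
    by (simp only:)
  then show ?thesis by (rule order_trans[rotated]) (rule add_increasing2[OF zero_le order_refl])
qed

lemma Eext_contr:
  assumes "g \<in> borel_measurable M" "contr C"
  shows "E_ext M E (\<lambda>x. C (g x)) \<le> E_ext M E g"
proof (cases "g \<in> L2 M")
  case True
  then show ?thesis unfolding E_ext_def using E_contr[OF True assms(2)] L2_contr[OF True assms(2)]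
    by simp
next
  case False
  then show ?thesis unfolding E_ext_def by simp
qed

end

lemma Ee_le:
  assumes "\<And>n. g n \<in> borel_measurable M" "loc_conv_in_measure M g f" "\<And>n. E_ext M E (g n) \<le> c"
  shows "E_e M E f \<le> c"
proof -
  have "E_e M E f \<le> liminf (\<lambda>n. E_ext M E (g n))"
    unfolding E_e_def by (rule Inf_lower) (use assms in blast)
  also have "\<dots> \<le> limsup (\<lambda>n. E_ext M E (g n))" by (rule Liminf_le_Limsup) simp
  also have "\<dots> \<le> c" by (rule Limsup_bounded) (use assms(3) in auto)
  finally show ?thesis .
qed

lemma Ee_le_Eext: "f \<in> borel_measurable M \<Longrightarrow> E_e M E f \<le> E_ext M E f"
  by (rule Ee_le[of "\<lambda>n. f"]) (auto intro: lc_const)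

lemma Ee_approx:
  assumes "E_e M E f < c"
  shows "\<exists>g. (\<forall>n. g n \<in> borel_measurable M) \<and> loc_conv_in_measure M g f \<and> (\<forall>n. E_ext M E (g n) < c)"
proof -
  from assms obtain g where g: "\<forall>n. g n \<in> borel_measurable M" "loc_conv_in_measure M g f"
    and lt: "liminf (\<lambda>n. E_ext M E (g n)) < c"
    unfolding E_e_def by (auto simp: Inf_less_iff)
  from lt have "\<not> c \<le> liminf (\<lambda>n. E_ext M E (g n))" by simp
  then obtain y where "y < c" "\<not> eventually (\<lambda>n. y < E_ext M E (g n)) sequentially"
    unfolding le_Liminf_iff by auto
  then have "frequently (\<lambda>n. E_ext M E (g n) < c) sequentially"
    unfolding not_eventually by (auto elim!: frequently_elim1)
  then have "infinite {n. E_ext M E (g n) < c}"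
    unfolding cofinite_eq_sequentially[symmetric] frequently_cofinite .
  then obtain r :: "nat \<Rightarrow> nat" where r: "strict_mono r" "\<And>n. r n \<in> {n. E_ext M E (g n) < c}"
    using infinite_enumerate by blast
  show ?thesis
    by (rule exI[of _ "\<lambda>n. g (r n)"]) (use g r lc_subseq in auto)
qed


lemma enn_comb: "0 \<le> t \<Longrightarrow> t \<le> 1 \<Longrightarrow> ennreal t * (x + ennreal e) + ennreal (1 - t) * (y + ennreal e) = ennreal t * x + ennreal (1 - t) * y + ennreal e"
proof -
  assume t: "0 \<le> t" "t \<le> 1"
  have s: "ennreal t + ennreal (1 - t) = 1" using ennreal_plus[of t "1-t"] t by simp
  have "ennreal t * (x + ennreal e) + ennreal (1 - t) * (y + ennreal e) = ennreal t * x + ennreal (1 - t) * y + (ennreal t + ennreal (1 - t)) * ennreal e"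
    by (simp add: algebra_simps)
  then show ?thesis unfolding s by simp
qed

lemma enn_lt_add: "(x::ennreal) < top \<Longrightarrow> 0 < e \<Longrightarrow> x < x + ennreal e"
  by simp

lemma enn_two_eps:
  fixes x y z :: ennreal
  assumes h: "\<And>a b. x < a \<Longrightarrow> y < b \<Longrightarrow> z \<le> a + b"
  shows "z \<le> x + y"
proof (rule ennreal_le_epsilon)
  fix e :: real assume xy: "x + y < top" and e: "0 < e"
  then have x: "x < top" and y: "y < top" by (auto simp: top_unique less_top)
  have "z \<le> (x + ennreal (e/2)) + (y + ennreal (e/2))"
    by (rule h) (use x y e enn_lt_add in auto)
  also have "\<dots> = x + y + ennreal e"
    using ennreal_plus[of "e/2" "e/2"] e by (simp add: algebra_simps)
  finally show "z \<le> x + y + ennreal e" .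
qed

lemma enn_comb_eps:
  fixes x y z :: ennreal
  assumes t: "0 \<le> t" "t \<le> 1" and x: "x < top" and y: "y < top"
    and h: "\<And>a b. x < a \<Longrightarrow> y < b \<Longrightarrow> z \<le> ennreal t * a + ennreal (1 - t) * b"
  shows "z \<le> ennreal t * x + ennreal (1 - t) * y"
proof (rule ennreal_le_epsilon)
  fix e :: real assume e: "0 < e"
  have "z \<le> ennreal t * (x + ennreal e) + ennreal (1 - t) * (y + ennreal e)"
    by (rule h) (use x y e enn_lt_add in auto)
  also have "\<dots> = ennreal t * x + ennreal (1 - t) * y + ennreal e" by (rule enn_comb[OF t])
  finally show "z \<le> ennreal t * x + ennreal (1 - t) * y + ennreal e" .
qed

lemma comb_bound:
  fixes t a b c d :: real
  assumes "0 \<le> t" "t \<le> 1"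
  shows "\<bar>t * a + (1 - t) * b - (t * c + (1 - t) * d)\<bar> \<le> \<bar>a - c\<bar> + \<bar>b - d\<bar>"
proof -
  have "t * a + (1 - t) * b - (t * c + (1 - t) * d) = t * (a - c) + (1 - t) * (b - d)"
    by (simp add: algebra_simps)
  then have "\<bar>t * a + (1 - t) * b - (t * c + (1 - t) * d)\<bar> \<le> \<bar>t * (a - c)\<bar> + \<bar>(1 - t) * (b - d)\<bar>"
    by (metis abs_triangle_ineq)
  also have "\<dots> = t * \<bar>a - c\<bar> + (1 - t) * \<bar>b - d\<bar>" using assms by (simp add: abs_mult)
  also have "\<dots> \<le> \<bar>a - c\<bar> + \<bar>b - d\<bar>"
    using assms by (intro add_mono mult_left_le_one_le) auto
  finally show ?thesis .
qed

lemma max_bound: "\<bar>max (a::real) b - max c d\<bar> \<le> \<bar>a - c\<bar> + \<bar>b - d\<bar>"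
  by (simp add: max_def abs_if)

lemma L2_max:
  assumes f: "f \<in> L2 M" and g: "g \<in> L2 M"
  shows "(\<lambda>x. max (f x) (g x)) \<in> L2 M"
proof -
  have c: "contr abs" unfolding contr_def by auto
  have e: "(\<lambda>x. max (f x) (g x)) = (\<lambda>x. ((1/2) * f x + (1/2) * g x) + \<bar>(1/2) * f x - (1/2) * g x\<bar>)"
  proof (rule ext)
    fix x show "max (f x) (g x) = ((1/2) * f x + (1/2) * g x) + \<bar>(1/2) * f x - (1/2) * g x\<bar>"
      unfolding max_def by (simp add: abs_if)
  qed
  have "(\<lambda>x. \<bar>(1/2) * f x - (1/2) * g x\<bar>) \<in> L2 M"
    using L2_contr[OF L2_diff[OF L2_cmult[OF f] L2_cmult[OF g]] c] .
  then show ?thesis unfolding e by (intro L2_add L2_cmult f g)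
qed

lemma Eext_fin_L2: "E_ext M E f < c \<Longrightarrow> f \<in> L2 M"
  unfolding E_ext_def by (cases "f \<in> L2 M") auto

context
  fixes M :: "'a measure" and E :: "('a \<Rightarrow> real) \<Rightarrow> ennreal"
  assumes D: "nonlinear_dirichlet_form M E"
begin

lemma Ee_zero: "E_e M E (\<lambda>x. 0) = 0"
proof -
  have "E_e M E (\<lambda>x. 0) \<le> E_ext M E (\<lambda>x. 0)" by (rule Ee_le_Eext) simp
  also have "\<dots> = 0" unfolding E_ext_def using L2_zero E_zero[OF D] by simp
  finally show ?thesis by simp
qed

lemma Ee_contr:
  assumes f: "f \<in> borel_measurable M" and C: "contr C"
  shows "E_e M E (\<lambda>x. C (f x)) \<le> E_e M E f"
proof (rule dense_ge)
  fix c assume "E_e M E f < c"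
  from Ee_approx[OF this] obtain g where g: "\<And>n. g n \<in> borel_measurable M"
    "loc_conv_in_measure M g f" "\<And>n. E_ext M E (g n) < c" by blast
  show "E_e M E (\<lambda>x. C (f x)) \<le> c"
  proof (rule Ee_le[of "\<lambda>n x. C (g n x)"])
    show "(\<lambda>x. C (g n x)) \<in> borel_measurable M" for n by (rule contr_meas[OF C g(1)])
    show "loc_conv_in_measure M (\<lambda>n x. C (g n x)) (\<lambda>x. C (f x))"
      by (rule lc_single[OF g(2) g(1) f]) (use C in \<open>simp add: contr_def\<close>)
    show "E_ext M E (\<lambda>x. C (g n x)) \<le> c" for n
      using Eext_contr[OF D g(1) C, of n] g(3)[of n] by (meson order_trans less_imp_le)
  qed
qed

lemma Ee_conv_strict:
  assumes f: "f \<in> borel_measurable M" and g: "g \<in> borel_measurable M"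
    and t: "0 \<le> t" "t \<le> 1" and a: "E_e M E f < a" and b: "E_e M E g < b"
  shows "E_e M E (\<lambda>x. t * f x + (1 - t) * g x) \<le> ennreal t * a + ennreal (1 - t) * b"
proof -
  from Ee_approx[OF a] obtain F where F: "\<And>n. F n \<in> borel_measurable M"
    "loc_conv_in_measure M F f" "\<And>n. E_ext M E (F n) < a" by blast
  from Ee_approx[OF b] obtain G where G: "\<And>n. G n \<in> borel_measurable M"
    "loc_conv_in_measure M G g" "\<And>n. E_ext M E (G n) < b" by blast
  show ?thesis
  proof (rule Ee_le[of "\<lambda>n x. t * F n x + (1 - t) * G n x"])
    show "(\<lambda>x. t * F n x + (1 - t) * G n x) \<in> borel_measurable M" for n
      using F(1)[of n] G(1)[of n] by measurable
    show "loc_conv_in_measure M (\<lambda>n x. t * F n x + (1 - t) * G n x) (\<lambda>x. t * f x + (1 - t) * g x)"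
      by (rule lc_bound[OF F(2) G(2) F(1) f G(1) g]) (rule comb_bound[OF t])
    fix n
    have Fn: "F n \<in> L2 M" by (rule Eext_fin_L2[OF F(3)])
    have Gn: "G n \<in> L2 M" by (rule Eext_fin_L2[OF G(3)])
    have Hn: "(\<lambda>x. t * F n x + (1 - t) * G n x) \<in> L2 M"
      by (intro L2_add L2_cmult Fn Gn)
    have "E_ext M E (\<lambda>x. t * F n x + (1 - t) * G n x) = E (\<lambda>x. t * F n x + (1 - t) * G n x)"
      unfolding E_ext_def using Hn by simp
    also have "\<dots> \<le> ennreal t * E (F n) + ennreal (1 - t) * E (G n)"
      by (rule E_convex[OF D Fn Gn t])
    also have "\<dots> = ennreal t * E_ext M E (F n) + ennreal (1 - t) * E_ext M E (G n)"
      unfolding E_ext_def using Fn Gn by simp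
    also have "\<dots> \<le> ennreal t * a + ennreal (1 - t) * b"
    proof -
      have "E_ext M E (F n) \<le> a" "E_ext M E (G n) \<le> b" using F(3)[of n] G(3)[of n] by auto
      then show ?thesis by (intro add_mono mult_left_mono) simp_all
    qed
    finally show "E_ext M E (\<lambda>x. t * F n x + (1 - t) * G n x) \<le> ennreal t * a + ennreal (1 - t) * b" .
  qed
qed

lemma Ee_max_strict:
  assumes f: "f \<in> borel_measurable M" and g: "g \<in> borel_measurable M"
    and a: "E_e M E f < a" and b: "E_e M E g < b"
  shows "E_e M E (\<lambda>x. max (f x) (g x)) \<le> a + b"
proof -
  from Ee_approx[OF a] obtain F where F: "\<And>n. F n \<in> borel_measurable M"
    "loc_conv_in_measure M F f" "\<And>n. E_ext M E (F n) < a" by blast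
  from Ee_approx[OF b] obtain G where G: "\<And>n. G n \<in> borel_measurable M"
    "loc_conv_in_measure M G g" "\<And>n. E_ext M E (G n) < b" by blast
  show ?thesis
  proof (rule Ee_le[of "\<lambda>n x. max (F n x) (G n x)"])
    show "(\<lambda>x. max (F n x) (G n x)) \<in> borel_measurable M" for n
      using F(1)[of n] G(1)[of n] by measurable
    show "loc_conv_in_measure M (\<lambda>n x. max (F n x) (G n x)) (\<lambda>x. max (f x) (g x))"
      by (rule lc_bound[OF F(2) G(2) F(1) f G(1) g]) (rule max_bound)
    fix n
    have Fn: "F n \<in> L2 M" by (rule Eext_fin_L2[OF F(3)])
    have Gn: "G n \<in> L2 M" by (rule Eext_fin_L2[OF G(3)])
    have Hn: "(\<lambda>x. max (F n x) (G n x)) \<in> L2 M" by (rule L2_max[OF Fn Gn])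
    have "E_ext M E (\<lambda>x. max (F n x) (G n x)) = E (\<lambda>x. max (F n x) (G n x))"
      unfolding E_ext_def using Hn by simp
    also have "\<dots> \<le> E (F n) + E (G n)" by (rule E_max[OF D Fn Gn])
    also have "\<dots> = E_ext M E (F n) + E_ext M E (G n)"
      unfolding E_ext_def using Fn Gn by simp
    also have "\<dots> \<le> a + b"
      by (intro add_mono less_imp_le F(3) G(3))
    finally show "E_ext M E (\<lambda>x. max (F n x) (G n x)) \<le> a + b" .
  qed
qed

lemma Ee_max:
  assumes f: "f \<in> borel_measurable M" and g: "g \<in> borel_measurable M"
  shows "E_e M E (\<lambda>x. max (f x) (g x)) \<le> E_e M E f + E_e M E g"
  by (rule enn_two_eps) (rule Ee_max_strict[OF f g])

lemma Ee_conv: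
  assumes f: "f \<in> borel_measurable M" and g: "g \<in> borel_measurable M"
    and t: "0 \<le> t" "t \<le> 1" and a: "E_e M E f < top" and b: "E_e M E g < top"
  shows "E_e M E (\<lambda>x. t * f x + (1 - t) * g x) \<le> ennreal t * E_e M E f + ennreal (1 - t) * E_e M E g"
  by (rule enn_comb_eps[OF t a b]) (rule Ee_conv_strict[OF f g t])

lemma Ee_star:
  assumes f: "f \<in> borel_measurable M" and t: "0 \<le> t" "t \<le> 1"
  shows "E_e M E (\<lambda>x. t * f x) \<le> ennreal t * E_e M E f"
proof (cases "E_e M E f = top")
  case True
  show ?thesis
  proof (cases "t = 0")
    case True
    have "(\<lambda>x. t * f x) = (\<lambda>x. 0)" using True by simp
    then show ?thesis using Ee_zero by simp
  next
    case False
    then have "ennreal t \<noteq> 0" using t by simp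
    then have "ennreal t * E_e M E f = top" using \<open>E_e M E f = top\<close> by (simp add: ennreal_mult_top)
    then show ?thesis by simp
  qed
next
  case False
  then have a: "E_e M E f < top" by (simp add: less_top)
  have z: "E_e M E (\<lambda>x. 0) < top" using Ee_zero by simp
  have "E_e M E (\<lambda>x. t * f x + (1 - t) * 0) \<le> ennreal t * E_e M E f + ennreal (1 - t) * E_e M E (\<lambda>x. 0)"
    by (rule Ee_conv[OF f _ t a z]) simp
  then show ?thesis unfolding Ee_zero by simp
qed

lemma Ee_symm:
  assumes f: "f \<in> borel_measurable M"
  shows "E_e M E (\<lambda>x. - f x) = E_e M E f"
proof (rule antisym)
  have c: "contr uminus" unfolding contr_def by auto
  show "E_e M E (\<lambda>x. - f x) \<le> E_e M E f" using Ee_contr[OF f c] by simp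
  have mf: "(\<lambda>x. - f x) \<in> borel_measurable M" using f by measurable
  show "E_e M E f \<le> E_e M E (\<lambda>x. - f x)" using Ee_contr[OF mf c] by simp
qed

end


lemma inv_suc_tendsto: "(\<lambda>k. ennreal (inverse (real (Suc k)))) \<longlonglongrightarrow> 0"
proof -
  have "(\<lambda>k. ennreal (inverse (real (Suc k)))) \<longlonglongrightarrow> ennreal 0"
    by (intro tendsto_ennrealI LIMSEQ_inverse_real_of_nat)
  then show ?thesis by simp
qed

lemma lc_diag:
  assumes sf: "sigma_finite_measure M"
    and A: "range A \<subseteq> sets M" "(\<Union>i. A i) = space M" "\<And>i. emeasure M (A i) \<noteq> \<infinity>" "incseq A"
    and G: "\<And>k. G k \<in> borel_measurable M" and h: "\<And>k. h k \<in> borel_measurable M"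
    and small: "\<And>k. emeasure M ({x \<in> space M. inverse (real (Suc k)) < \<bar>G k x - h k x\<bar>} \<inter> A k)
                    < ennreal (inverse (real (Suc k)))"
  shows "loc_conv_in_measure M (\<lambda>k x. G k x - h k x) (\<lambda>x. 0)"
  unfolding loc_conv_in_measure_def
proof (intro ballI impI allI)
  fix B \<epsilon> assume B: "B \<in> sets M" "emeasure M B < \<infinity>" and e: "(0::real) < \<epsilon>"
  define R where "R k = B - A k" for k
  have Rs: "R k \<in> sets M" for k unfolding R_def using A(1) B(1) by auto
  have Rdec: "decseq R" unfolding R_def decseq_def using A(4) by (auto simp: incseq_def)
  have RB: "R k \<subseteq> B" for k unfolding R_def by auto
  have Rfin: "emeasure M (R k) \<noteq> \<infinity>" for k
  proof -
    have "emeasure M (R k) < \<infinity>" using emeasure_mono[OF RB B(1)] B(2) by (rule le_less_trans)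
    then show ?thesis by simp
  qed
  have "(\<lambda>k. emeasure M (R k)) \<longlonglongrightarrow> emeasure M (\<Inter>k. R k)"
    by (rule Lim_emeasure_decseq) (use Rs Rdec Rfin in auto)
  moreover have "(\<Inter>k. R k) = {}"
    using A(2) sets.sets_into_space[OF B(1)] unfolding R_def by auto
  ultimately have R0: "(\<lambda>k. emeasure M (R k)) \<longlonglongrightarrow> 0" by simp
  have lim: "(\<lambda>k. ennreal (inverse (real (Suc k))) + emeasure M (R k)) \<longlonglongrightarrow> 0"
    using tendsto_add[OF inv_suc_tendsto R0] by simp
  have ev: "eventually (\<lambda>k. inverse (real (Suc k)) < \<epsilon>) sequentially"
    using order_tendstoD(2)[OF LIMSEQ_inverse_real_of_nat e] .
  have ev2: "eventually (\<lambda>k. emeasure M ({x \<in> space M. \<epsilon> < \<bar>G k x - h k x - 0\<bar>} \<inter> B)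
        \<le> ennreal (inverse (real (Suc k))) + emeasure M (R k)) sequentially"
    using ev
  proof (rule eventually_mono)
    fix k assume k: "inverse (real (Suc k)) < \<epsilon>"
    define S where "S = {x \<in> space M. inverse (real (Suc k)) < \<bar>G k x - h k x\<bar>} \<inter> A k"
    have Ss: "S \<in> sets M" unfolding S_def using G h A(1) by auto
    have "{x \<in> space M. \<epsilon> < \<bar>G k x - h k x - 0\<bar>} \<inter> B \<subseteq> S \<union> R k"
      unfolding S_def R_def using k by auto
    then have "emeasure M ({x \<in> space M. \<epsilon> < \<bar>G k x - h k x - 0\<bar>} \<inter> B) \<le> emeasure M (S \<union> R k)"
      by (intro emeasure_mono) (use Ss Rs in auto)
    also have "\<dots> \<le> emeasure M S + emeasure M (R k)" by (intro emeasure_subadditive Ss Rs)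
    also have "\<dots> \<le> ennreal (inverse (real (Suc k))) + emeasure M (R k)"
      using small[of k] unfolding S_def by (intro add_mono) auto
    finally show "emeasure M ({x \<in> space M. \<epsilon> < \<bar>G k x - h k x - 0\<bar>} \<inter> B)
        \<le> ennreal (inverse (real (Suc k))) + emeasure M (R k)" .
  qed
  show "(\<lambda>k. emeasure M ({x \<in> space M. \<epsilon> < \<bar>G k x - h k x - 0\<bar>} \<inter> B)) \<longlonglongrightarrow> 0"
    by (rule tendsto_sandwich[OF _ ev2 tendsto_const lim]) simp
qed

lemma Ee_lsc:
  assumes sf: "sigma_finite_measure M"
    and hm: "\<And>k. h k \<in> borel_measurable M" and h'm: "h' \<in> borel_measurable M"
    and conv: "loc_conv_in_measure M h h'" and bd: "\<And>k. E_e M E (h k) \<le> c"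
  shows "E_e M E h' \<le> c"
proof (rule dense_ge)
  fix c' assume cc: "c < c'"
  obtain A :: "nat \<Rightarrow> 'a set" where A: "range A \<subseteq> sets M" "(\<Union>i. A i) = space M"
    "\<And>i. emeasure M (A i) \<noteq> \<infinity>" "incseq A"
    using sigma_finite_measure.sigma_finite_incseq[OF sf] by metis
  have "\<forall>k. \<exists>g. (\<forall>n. g n \<in> borel_measurable M) \<and> loc_conv_in_measure M g (h k) \<and> (\<forall>n. E_ext M E (g n) < c')"
    using Ee_approx bd cc by (meson le_less_trans)
  then obtain g where g: "\<And>k n. g k n \<in> borel_measurable M" "\<And>k. loc_conv_in_measure M (g k) (h k)"
    "\<And>k n. E_ext M E (g k n) < c'" by metis
  have "\<forall>k. \<exists>n. emeasure M ({x \<in> space M. inverse (real (Suc k)) < \<bar>g k n x - h k x\<bar>} \<inter> A k)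
                    < ennreal (inverse (real (Suc k)))"
  proof
    fix k
    have Afin: "emeasure M (A k) < \<infinity>" using A(3)[of k] by (simp add: less_top)
    have ik: "(0::real) < inverse (real (Suc k))" by simp
    have "(\<lambda>n. emeasure M ({x \<in> space M. inverse (real (Suc k)) < \<bar>g k n x - h k x\<bar>} \<inter> A k)) \<longlonglongrightarrow> 0"
      using g(2)[of k, unfolded loc_conv_in_measure_def, rule_format, OF _ Afin ik] A(1) by auto
    moreover have "(0::ennreal) < ennreal (inverse (real (Suc k)))" by simp
    ultimately have "eventually (\<lambda>n. emeasure M ({x \<in> space M. inverse (real (Suc k)) < \<bar>g k n x - h k x\<bar>} \<inter> A k)
                    < ennreal (inverse (real (Suc k)))) sequentially"
      by (rule order_tendstoD(2))
    then show "\<exists>n. emeasure M ({x \<in> space M. inverse (real (Suc k)) < \<bar>g k n x - h k x\<bar>} \<inter> A k)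
                    < ennreal (inverse (real (Suc k)))"
      by (meson eventually_sequentially order_refl)
  qed
  then obtain n where n: "\<And>k. emeasure M ({x \<in> space M. inverse (real (Suc k)) < \<bar>g k (n k) x - h k x\<bar>} \<inter> A k)
                    < ennreal (inverse (real (Suc k)))" by metis
  define G where "G k = g k (n k)" for k
  have Gm: "\<And>k. G k \<in> borel_measurable M" unfolding G_def using g(1) by auto
  have d: "loc_conv_in_measure M (\<lambda>k x. G k x - h k x) (\<lambda>x. 0)"
    by (rule lc_diag[OF sf A Gm hm]) (use n in \<open>simp add: G_def\<close>)
  have dm: "\<And>k. (\<lambda>x. G k x - h k x) \<in> borel_measurable M" using Gm hm by measurable
  have GC: "loc_conv_in_measure M G h'"
    by (rule lc_bound[OF d conv dm _ hm h'm]) auto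
  show "E_e M E h' \<le> c'"
    by (rule Ee_le[OF Gm GC]) (use g(3) in \<open>auto simp: G_def intro: less_imp_le\<close>)
qed


definition Sset :: "'a measure \<Rightarrow> (('a \<Rightarrow> real) \<Rightarrow> ennreal) \<Rightarrow> ('a \<Rightarrow> real) \<Rightarrow> real set" where
  "Sset M E f = {l::real. l > 0 \<and> E_e M E (\<lambda>x. f x / l) \<le> 1}"

lemma N_def': "Le_norm M E f = Inf (Sset M E f)"
  unfolding Le_norm_def Sset_def ..

lemma Sset_bdd: "bdd_below (Sset M E f)"
  unfolding Sset_def by (rule bdd_belowI[of _ 0]) auto

lemma N_lower: "l \<in> Sset M E f \<Longrightarrow> Le_norm M E f \<le> l"
  unfolding N_def' by (rule cInf_lower[OF _ Sset_bdd])

lemma N_nonneg: "Sset M E f \<noteq> {} \<Longrightarrow> 0 \<le> Le_norm M E f"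
  unfolding N_def' by (rule cInf_greatest) (auto simp: Sset_def)

lemma N_le:
  assumes a: "0 \<le> a" and h: "\<And>l. a < l \<Longrightarrow> l \<in> Sset M E f"
  shows "Le_norm M E f \<le> a"
proof (rule ccontr)
  assume "\<not> Le_norm M E f \<le> a"
  then have lt: "a < Le_norm M E f" by simp
  define l where "l = (a + Le_norm M E f) / 2"
  have "a < l" "l < Le_norm M E f" using lt unfolding l_def by auto
  then show False using N_lower[OF h[of l]] by simp
qed

lemma filterlim_scale_right0:
  assumes k: "(0::real) < k"
  shows "filterlim (\<lambda>l. l * k) (at_right 0) (at_right 0)"
proof (rule tendsto_imp_filterlim_at_right)
  have "((\<lambda>l::real. l) \<longlongrightarrow> 0) (at_right 0)" by (rule tendsto_ident_at)
  then show "((\<lambda>l. l * k) \<longlongrightarrow> 0) (at_right 0)" using tendsto_mult_left_zero by blast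
  show "eventually (\<lambda>l. l * k > 0) (at_right 0)"
    using eventually_at_right_less[of "0::real"] by (rule eventually_mono) (use k in simp)
qed

context
  fixes M :: "'a measure" and E :: "('a \<Rightarrow> real) \<Rightarrow> ennreal"
  assumes D: "nonlinear_dirichlet_form M E"
begin

lemma Ee_scale_down:
  assumes f: "f \<in> borel_measurable M" and l: "0 < l" "l \<le> l'"
  shows "E_e M E (\<lambda>x. f x / l') \<le> ennreal (l / l') * E_e M E (\<lambda>x. f x / l)"
proof -
  have eq: "(\<lambda>x. f x / l') = (\<lambda>x. (l / l') * (f x / l))" using l by (auto simp: field_simps)
  have mf: "(\<lambda>x. f x / l) \<in> borel_measurable M" using f by measurable
  show ?thesis unfolding eq by (rule Ee_star[OF D mf]) (use l in auto)
qed

lemma Sset_up: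
  assumes f: "f \<in> borel_measurable M" and l: "l \<in> Sset M E f" "l \<le> l'"
  shows "l' \<in> Sset M E f"
proof -
  have l0: "0 < l" and e1: "E_e M E (\<lambda>x. f x / l) \<le> 1" using l(1) unfolding Sset_def by auto
  have "E_e M E (\<lambda>x. f x / l') \<le> ennreal (l / l') * E_e M E (\<lambda>x. f x / l)"
    by (rule Ee_scale_down[OF f l0 l(2)])
  also have "\<dots> \<le> ennreal (l / l') * 1" by (rule mult_left_mono[OF e1]) simp
  also have "\<dots> \<le> 1" using l0 l(2) by simp
  finally show ?thesis using l0 l(2) unfolding Sset_def by simp
qed

lemma ME_Sset_ne:
  assumes f: "f \<in> ME M E"
  shows "Sset M E f \<noteq> {}"
proof -
  have lim: "((\<lambda>l::real. E_e M E (\<lambda>x. l * f x)) \<longlongrightarrow> 0) (at_right 0)"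
    using f unfolding ME_def by auto
  have "eventually (\<lambda>l. E_e M E (\<lambda>x. l * f x) < 1) (at_right 0)"
    by (rule order_tendstoD(2)[OF lim]) simp
  then obtain b where b: "b > 0" "\<And>y. y > 0 \<Longrightarrow> y < b \<Longrightarrow> E_e M E (\<lambda>x. y * f x) < 1"
    unfolding eventually_at_right_field by auto
  define y where "y = b / 2"
  have y: "0 < y" "y < b" using b unfolding y_def by auto
  have eq: "(\<lambda>x. f x / (1 / y)) = (\<lambda>x. y * f x)" by auto
  have h: "E_e M E (\<lambda>x. f x / (1 / y)) \<le> 1" unfolding eq using b(2)[OF y] by (rule less_imp_le)
  have "1 / y \<in> Sset M E f" unfolding Sset_def using h y by simp
  then show ?thesis by auto
qed

lemma N_gt:
  assumes f: "f \<in> ME M E" and l: "Le_norm M E f < l"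
  shows "l \<in> Sset M E f"
proof -
  have mf: "f \<in> borel_measurable M" using f unfolding ME_def by auto
  from l obtain l0 where "l0 \<in> Sset M E f" "l0 < l"
    unfolding N_def' using cInf_less_iff[OF ME_Sset_ne[OF f] Sset_bdd] by auto
  then show ?thesis using Sset_up[OF mf] by auto
qed

lemma N_nonneg': "f \<in> ME M E \<Longrightarrow> 0 \<le> Le_norm M E f"
  by (rule N_nonneg[OF ME_Sset_ne])

lemma ME_meas: "f \<in> ME M E \<Longrightarrow> f \<in> borel_measurable M"
  unfolding ME_def by auto

lemma ME_scale:
  assumes f: "f \<in> ME M E" and k: "0 < k"
  shows "((\<lambda>l::real. E_e M E (\<lambda>x. (l * k) * f x)) \<longlongrightarrow> 0) (at_right 0)"
proof -
  have lim: "((\<lambda>l::real. E_e M E (\<lambda>x. l * f x)) \<longlongrightarrow> 0) (at_right 0)"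
    using f unfolding ME_def by auto
  show ?thesis using filterlim_compose[OF lim filterlim_scale_right0[OF k]] by simp
qed

lemma lip_meas:
  fixes k :: real
  assumes k: "0 < k" and P: "\<And>a b. \<bar>P a - P b\<bar> \<le> k * \<bar>a - b\<bar>" and f: "f \<in> borel_measurable M"
  shows "(\<lambda>x. P (f x)) \<in> borel_measurable M"
proof -
  have "k-lipschitz_on UNIV P"
    using P k by (intro lipschitz_onI) (auto simp: dist_real_def)
  then have "continuous_on UNIV P" by (rule lipschitz_on_continuous_on)
  then have "P \<in> borel_measurable borel" by (rule borel_measurable_continuous_onI)
  then show ?thesis using f by (rule measurable_compose[rotated])
qed

lemma lip_ME_N:
  assumes f: "f \<in> ME M E" and k: "0 < k"
    and P: "\<And>a b. \<bar>P a - P b\<bar> \<le> k * \<bar>a - b\<bar>" and P0: "P 0 = 0"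
  shows "(\<lambda>x. P (f x)) \<in> ME M E \<and> Le_norm M E (\<lambda>x. P (f x)) \<le> k * Le_norm M E f"
proof
  have mf: "f \<in> borel_measurable M" using f unfolding ME_def by auto
  have mh: "(\<lambda>x. P (f x)) \<in> borel_measurable M" by (rule lip_meas[OF k P mf])
  have bound: "E_e M E (\<lambda>x. l * P (f x)) \<le> E_e M E (\<lambda>x. (l * k) * f x)" if l: "0 < l" for l
  proof -
    define C where "C t = l * P (t / (l * k))" for t
    have C: "contr C" unfolding contr_def
    proof (intro conjI allI)
      fix s t
      have "\<bar>C s - C t\<bar> = l * \<bar>P (s / (l * k)) - P (t / (l * k))\<bar>"
        unfolding C_def using l by (simp add: abs_mult right_diff_distrib[symmetric])
      also have "\<dots> \<le> l * (k * \<bar>s / (l * k) - t / (l * k)\<bar>)"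
        using P l by (intro mult_left_mono) auto
      also have "\<dots> = \<bar>s - t\<bar>" using l k by (simp add: field_simps abs_divide diff_divide_distrib[symmetric])
      finally show "\<bar>C s - C t\<bar> \<le> \<bar>s - t\<bar>" .
      show "C 0 = 0" unfolding C_def using P0 by simp
    qed
    have mlf: "(\<lambda>x. (l * k) * f x) \<in> borel_measurable M" using mf by measurable
    have eq: "(\<lambda>x. l * P (f x)) = (\<lambda>x. C ((l * k) * f x))"
      unfolding C_def using l k by auto
    show ?thesis unfolding eq by (rule Ee_contr[OF D mlf C])
  qed
  have "((\<lambda>l::real. E_e M E (\<lambda>x. l * P (f x))) \<longlongrightarrow> 0) (at_right 0)"
  proof (rule tendsto_sandwich[OF _ _ tendsto_const ME_scale[OF f k]])
    show "eventually (\<lambda>l. 0 \<le> E_e M E (\<lambda>x. l * P (f x))) (at_right 0)" by simp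
    show "eventually (\<lambda>l. E_e M E (\<lambda>x. l * P (f x)) \<le> E_e M E (\<lambda>x. (l * k) * f x)) (at_right 0)"
      using eventually_at_right_less[of "0::real"] by (rule eventually_mono) (rule bound)
  qed
  then show "(\<lambda>x. P (f x)) \<in> ME M E" unfolding ME_def using mh by auto
  show "Le_norm M E (\<lambda>x. P (f x)) \<le> k * Le_norm M E f"
  proof (rule N_le)
    show "0 \<le> k * Le_norm M E f" using k N_nonneg'[OF f] by simp
    fix m assume m: "k * Le_norm M E f < m"
    define l where "l = m / k"
    have ml: "m = k * l" unfolding l_def using k by simp
    have "Le_norm M E f < l" using m k unfolding ml by simp
    then have lS: "l \<in> Sset M E f" by (rule N_gt[OF f])
    then have l0: "0 < l" and e1: "E_e M E (\<lambda>x. f x / l) \<le> 1" unfolding Sset_def by auto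
    define C where "C t = P (l * t) / (k * l)" for t
    have C: "contr C" unfolding contr_def
    proof (intro conjI allI)
      fix s t
      have "\<bar>C s - C t\<bar> = \<bar>P (l * s) - P (l * t)\<bar> / (k * l)"
        unfolding C_def using l0 k by (simp add: abs_divide diff_divide_distrib[symmetric])
      also have "\<dots> \<le> (k * \<bar>l * s - l * t\<bar>) / (k * l)"
        using P l0 k by (intro divide_right_mono) auto
      also have "\<dots> = \<bar>s - t\<bar>" using l0 k by (simp add: abs_mult right_diff_distrib[symmetric])
      finally show "\<bar>C s - C t\<bar> \<le> \<bar>s - t\<bar>" .
      show "C 0 = 0" unfolding C_def using P0 by simp
    qed
    have mfl: "(\<lambda>x. f x / l) \<in> borel_measurable M" using mf by measurable
    have eq: "(\<lambda>x. P (f x) / m) = (\<lambda>x. C (f x / l))"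
      unfolding C_def ml using l0 k by auto
    have "E_e M E (\<lambda>x. P (f x) / m) \<le> 1"
      unfolding eq using Ee_contr[OF D mfl C] e1 by (rule order_trans)
    then show "m \<in> Sset M E (\<lambda>x. P (f x))" unfolding Sset_def using ml l0 k by simp
  qed
qed

end


lemma SN_AE:
  assumes f: "f \<in> Linf M"
  shows "AE x in M. \<bar>f x\<bar> \<le> sup_norm M f"
proof -
  from f obtain C where mf: "f \<in> borel_measurable M" and C: "AE x in M. \<bar>f x\<bar> \<le> C"
    unfolding Linf_def by auto
  have m: "(\<lambda>x. ereal \<bar>f x\<bar>) \<in> borel_measurable M" using mf by measurable
  have le: "esssup M (\<lambda>x. ereal \<bar>f x\<bar>) \<le> ereal C"
    by (rule esssup_I[OF m]) (use C in auto)
  have ae: "AE x in M. ereal \<bar>f x\<bar> \<le> esssup M (\<lambda>x. ereal \<bar>f x\<bar>)" by (rule esssup_AE)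
  show ?thesis
  proof (cases "esssup M (\<lambda>x. ereal \<bar>f x\<bar>)")
    case (real r)
    then show ?thesis using ae unfolding sup_norm_def by auto
  next
    case PInf
    then show ?thesis using le by simp
  next
    case MInf
    then show ?thesis using ae by auto
  qed
qed

lemma SN_le:
  assumes mf: "f \<in> borel_measurable M" and c: "0 \<le> c" and ae: "AE x in M. \<bar>f x\<bar> \<le> c"
  shows "sup_norm M f \<le> c"
proof -
  have m: "(\<lambda>x. ereal \<bar>f x\<bar>) \<in> borel_measurable M" using mf by measurable
  have le: "esssup M (\<lambda>x. ereal \<bar>f x\<bar>) \<le> ereal c"
    by (rule esssup_I[OF m]) (use ae in auto)
  then show ?thesis unfolding sup_norm_def using c
    by (cases "esssup M (\<lambda>x. ereal \<bar>f x\<bar>)") auto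
qed

lemma SN_nonneg:
  assumes mf: "f \<in> borel_measurable M"
  shows "0 \<le> sup_norm M f"
proof (cases "emeasure M (space M) = 0")
  case True
  have m: "(\<lambda>x. ereal \<bar>f x\<bar>) \<in> borel_measurable M" using mf by measurable
  show ?thesis unfolding sup_norm_def using esssup_zero_space[OF True m] by simp
next
  case False
  have m: "(\<lambda>x. ereal 0) \<in> borel_measurable M" by simp
  have "esssup M (\<lambda>x. ereal 0) \<le> esssup M (\<lambda>x. ereal \<bar>f x\<bar>)"
    by (rule esssup_mono[OF m]) simp
  then have "0 \<le> esssup M (\<lambda>x. ereal \<bar>f x\<bar>)" using esssup_const[OF False, of "ereal 0"] by (simp add: zero_ereal_def)
  then show ?thesis unfolding sup_norm_def by (cases "esssup M (\<lambda>x. ereal \<bar>f x\<bar>)") auto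
qed

lemma Linf_bounded:
  assumes "f \<in> borel_measurable M" "\<And>x. \<bar>f x\<bar> \<le> c"
  shows "f \<in> Linf M"
  unfolding Linf_def using assms by auto

context
  fixes M :: "'a measure" and E :: "('a \<Rightarrow> real) \<Rightarrow> ennreal"
  assumes D: "nonlinear_dirichlet_form M E"
begin

lemma ME_add_N:
  assumes f: "f \<in> ME M E" and g: "g \<in> ME M E"
  shows "(\<lambda>x. f x + g x) \<in> ME M E \<and> Le_norm M E (\<lambda>x. f x + g x) \<le> Le_norm M E f + Le_norm M E g"
proof
  have mf: "f \<in> borel_measurable M" and mg: "g \<in> borel_measurable M"
    using f g unfolding ME_def by auto
  have two: "(0::real) < 2" by simp
  have lf: "((\<lambda>l::real. E_e M E (\<lambda>x. (l * 2) * f x)) \<longlongrightarrow> 0) (at_right 0)" by (rule ME_scale[OF D f two])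
  have lg: "((\<lambda>l::real. E_e M E (\<lambda>x. (l * 2) * g x)) \<longlongrightarrow> 0) (at_right 0)" by (rule ME_scale[OF D g two])
  define U where "U l = ennreal (1/2) * E_e M E (\<lambda>x. (l * 2) * f x) + ennreal (1 - 1/2) * E_e M E (\<lambda>x. (l * 2) * g x)" for l
  have lU: "(U \<longlongrightarrow> 0) (at_right 0)"
  proof -
    have "(U \<longlongrightarrow> ennreal (1/2) * 0 + ennreal (1 - 1/2) * 0) (at_right 0)"
      unfolding U_def by (intro tendsto_add tendsto_mult_ennreal tendsto_const lf lg) auto
    then show ?thesis by simp
  qed
  have ev: "eventually (\<lambda>l. E_e M E (\<lambda>x. (l * 2) * f x) < 1 \<and> E_e M E (\<lambda>x. (l * 2) * g x) < 1 \<and> 0 < l) (at_right 0)"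
    by (intro eventually_conj order_tendstoD(2)[OF lf] order_tendstoD(2)[OF lg] eventually_at_right_less) simp_all
  have "((\<lambda>l::real. E_e M E (\<lambda>x. l * (f x + g x))) \<longlongrightarrow> 0) (at_right 0)"
  proof (rule tendsto_sandwich[OF _ _ tendsto_const lU])
    show "eventually (\<lambda>l. 0 \<le> E_e M E (\<lambda>x. l * (f x + g x))) (at_right 0)" by simp
    show "eventually (\<lambda>l. E_e M E (\<lambda>x. l * (f x + g x)) \<le> U l) (at_right 0)"
      using ev
    proof (rule eventually_mono)
      fix l assume l: "E_e M E (\<lambda>x. (l * 2) * f x) < 1 \<and> E_e M E (\<lambda>x. (l * 2) * g x) < 1 \<and> 0 < l"
      have m1: "(\<lambda>x. (l * 2) * f x) \<in> borel_measurable M" using mf by measurable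
      have m2: "(\<lambda>x. (l * 2) * g x) \<in> borel_measurable M" using mg by measurable
      have eq: "(\<lambda>x. l * (f x + g x)) = (\<lambda>x. (1/2) * ((l * 2) * f x) + (1 - 1/2) * ((l * 2) * g x))"
        by (auto simp: algebra_simps)
      show "E_e M E (\<lambda>x. l * (f x + g x)) \<le> U l"
        unfolding eq U_def by (rule Ee_conv[OF D m1 m2]) (use l in \<open>auto simp: less_top[symmetric] intro: order.strict_trans\<close>)
    qed
  qed
  then show "(\<lambda>x. f x + g x) \<in> ME M E" unfolding ME_def using mf mg by auto
  show "Le_norm M E (\<lambda>x. f x + g x) \<le> Le_norm M E f + Le_norm M E g"
  proof (rule N_le)
    show "0 \<le> Le_norm M E f + Le_norm M E g" using N_nonneg'[OF D f] N_nonneg'[OF D g] by simp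
    fix m assume m: "Le_norm M E f + Le_norm M E g < m"
    define d where "d = (m - (Le_norm M E f + Le_norm M E g)) / 2"
    define p where "p = Le_norm M E f + d"
    define q where "q = Le_norm M E g + d"
    have d: "0 < d" using m unfolding d_def by simp
    have pS: "p \<in> Sset M E f" unfolding p_def by (rule N_gt[OF D f]) (use d in simp)
    have qS: "q \<in> Sset M E g" unfolding q_def by (rule N_gt[OF D g]) (use d in simp)
    have p0: "0 < p" and q0: "0 < q" using pS qS unfolding Sset_def by auto
    have ep: "E_e M E (\<lambda>x. f x / p) \<le> 1" and eq': "E_e M E (\<lambda>x. g x / q) \<le> 1"
      using pS qS unfolding Sset_def by auto
    have mpq: "m = p + q" unfolding p_def q_def d_def by simp
    define t where "t = p / (p + q)"
    have t: "0 \<le> t" "t \<le> 1" unfolding t_def using p0 q0 by auto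
    have t1: "1 - t = q / (p + q)" unfolding t_def using p0 q0 by (simp add: field_simps)
    have m1: "(\<lambda>x. f x / p) \<in> borel_measurable M" using mf by measurable
    have m2: "(\<lambda>x. g x / q) \<in> borel_measurable M" using mg by measurable
    have eqf: "(\<lambda>x. (f x + g x) / m) = (\<lambda>x. t * (f x / p) + (1 - t) * (g x / q))"
    proof (rule ext)
      fix x
      have a1: "t * (f x / p) = f x / (p + q)" unfolding t_def using p0 q0 by simp
      have a2: "(1 - t) * (g x / q) = g x / (p + q)" unfolding t1 using p0 q0 by simp
      show "(f x + g x) / m = t * (f x / p) + (1 - t) * (g x / q)"
        unfolding a1 a2 mpq by (simp add: add_divide_distrib)
    qed
    have "E_e M E (\<lambda>x. (f x + g x) / m) \<le> ennreal t * E_e M E (\<lambda>x. f x / p) + ennreal (1 - t) * E_e M E (\<lambda>x. g x / q)"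
    proof -
      have fa: "E_e M E (\<lambda>x. f x / p) < top" using ep ennreal_one_less_top by (rule le_less_trans)
      have ga: "E_e M E (\<lambda>x. g x / q) < top" using eq' ennreal_one_less_top by (rule le_less_trans)
      show ?thesis unfolding eqf by (rule Ee_conv[OF D m1 m2 t fa ga])
    qed
    also have "\<dots> \<le> ennreal t * 1 + ennreal (1 - t) * 1"
      by (intro add_mono mult_left_mono ep eq') auto
    also have "\<dots> = 1" using t ennreal_plus[of t "1 - t"] by simp
    finally show "m \<in> Sset M E (\<lambda>x. f x + g x)" unfolding Sset_def using p0 q0 mpq by simp
  qed
qed

lemma ME_zero: "(\<lambda>x. 0) \<in> ME M E \<and> Le_norm M E (\<lambda>x. 0) = 0"
proof
  show "(\<lambda>x. 0) \<in> ME M E" unfolding ME_def using Ee_zero[OF D] by simp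
  have "Sset M E (\<lambda>x. 0) = {0<..}" unfolding Sset_def using Ee_zero[OF D] by auto
  then show "Le_norm M E (\<lambda>x. 0) = 0" unfolding N_def' by simp
qed

lemma ME_cmult_N:
  assumes f: "f \<in> ME M E"
  shows "(\<lambda>x. c * f x) \<in> ME M E \<and> Le_norm M E (\<lambda>x. c * f x) = \<bar>c\<bar> * Le_norm M E f"
proof (cases "c = 0")
  case True
  then show ?thesis using ME_zero by simp
next
  case False
  have k: "0 < \<bar>c\<bar>" using False by simp
  have A: "(\<lambda>x. c * f x) \<in> ME M E \<and> Le_norm M E (\<lambda>x. c * f x) \<le> \<bar>c\<bar> * Le_norm M E f"
    by (rule lip_ME_N[OF D f k, of "\<lambda>t. c * t"]) (auto simp: abs_mult right_diff_distrib[symmetric])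
  have k': "0 < 1 / \<bar>c\<bar>" using k by simp
  have B: "(\<lambda>x. (\<lambda>t. t / c) (c * f x)) \<in> ME M E \<and> Le_norm M E (\<lambda>x. (\<lambda>t. t / c) (c * f x)) \<le> (1 / \<bar>c\<bar>) * Le_norm M E (\<lambda>x. c * f x)"
    by (rule lip_ME_N[OF D conjunct1[OF A] k']) (auto simp: abs_divide diff_divide_distrib[symmetric])
  have "(\<lambda>x. (\<lambda>t. t / c) (c * f x)) = f" using False by auto
  then have "Le_norm M E f \<le> (1 / \<bar>c\<bar>) * Le_norm M E (\<lambda>x. c * f x)" using B by simp
  then have "\<bar>c\<bar> * Le_norm M E f \<le> Le_norm M E (\<lambda>x. c * f x)" using k by (simp add: field_simps)
  then show ?thesis using A by auto
qed

lemma ME_diff_N: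
  assumes f: "f \<in> ME M E" and g: "g \<in> ME M E"
  shows "(\<lambda>x. f x - g x) \<in> ME M E"
proof -
  have "(\<lambda>x. (-1) * g x) \<in> ME M E" using ME_cmult_N[OF g] by blast
  then have "(\<lambda>x. f x + (-1) * g x) \<in> ME M E" using ME_add_N[OF f] by blast
  then show ?thesis by simp
qed

end


primrec fmax :: "(nat \<Rightarrow> 'a \<Rightarrow> real) \<Rightarrow> nat \<Rightarrow> nat \<Rightarrow> 'a \<Rightarrow> real" where
  "fmax h N 0 = h N"
| "fmax h N (Suc K) = (\<lambda>x. max (fmax h N K x) (h (N + Suc K) x))"

lemma fmax_meas: "(\<And>n. h n \<in> borel_measurable M) \<Longrightarrow> fmax h N K \<in> borel_measurable M"
  by (induction K) auto

lemma fmax_bounds: "(\<And>n x. 0 \<le> h n x \<and> h n x \<le> 1) \<Longrightarrow> 0 \<le> fmax h N K x \<and> fmax h N K x \<le> 1"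
  by (induction K) (auto simp: max_def)

lemma fmax_incseq: "incseq (\<lambda>K. fmax h N K x)"
  by (rule incseq_SucI) simp

lemma fmax_ge: "h N x \<le> fmax h N K x"
  by (induction K) (auto simp: max_def)

lemma fmax_shift: "fmax h (Suc N) K x \<le> fmax h N (Suc K) x"
proof (induction K)
  case 0
  then show ?case by simp
next
  case (Suc K)
  have e: "Suc N + Suc K = N + Suc (Suc K)" by simp
  show ?case using Suc by (simp only: fmax.simps e)
qed

lemma int_hw:
  fixes w h :: "'a \<Rightarrow> real"
  assumes w: "integrable M w" and mh: "h \<in> borel_measurable M" and b: "\<And>x. \<bar>h x\<bar> \<le> 1"
  shows "integrable M (\<lambda>x. h x * w x)"
proof (rule Bochner_Integration.integrable_bound[OF w])
  have "w \<in> borel_measurable M" using w by auto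
  then show "(\<lambda>x. h x * w x) \<in> borel_measurable M" using mh by measurable
  show "AE x in M. norm (h x * w x) \<le> norm (w x)"
  proof (rule AE_I2)
    fix x
    have "\<bar>h x\<bar> * \<bar>w x\<bar> \<le> 1 * \<bar>w x\<bar>" by (rule mult_right_mono[OF b]) simp
    then show "norm (h x * w x) \<le> norm (w x)" by (simp add: abs_mult)
  qed
qed

lemma half_pow_sum: "0 < l \<Longrightarrow> (2 - (1/2::real)^K) * (1/2)^N / l + (1/2)^(N + Suc K) / l = (2 - (1/2)^(Suc K)) * (1/2)^N / l"
  by (simp add: power_add field_simps)

context
  fixes M :: "'a measure" and E :: "('a \<Rightarrow> real) \<Rightarrow> ennreal"
  assumes D: "nonlinear_dirichlet_form M E"
begin

lemma fmax_Ee: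
  assumes hm: "\<And>n. h n \<in> borel_measurable M" and l: "0 < l"
    and hb: "\<And>n. N \<le> n \<Longrightarrow> E_e M E (\<lambda>x. h n x / l) \<le> ennreal ((1/2)^n / l)"
  shows "E_e M E (\<lambda>x. fmax h N K x / l) \<le> ennreal ((2 - (1/2)^K) * (1/2)^N / l)"
proof (induction K)
  case 0
  show ?case using hb[of N] by simp
next
  case (Suc K)
  have m1: "(\<lambda>x. fmax h N K x / l) \<in> borel_measurable M" using fmax_meas[OF hm] by measurable
  have m2: "(\<lambda>x. h (N + Suc K) x / l) \<in> borel_measurable M" using hm by measurable
  have eq: "(\<lambda>x. fmax h N (Suc K) x / l) = (\<lambda>x. max (fmax h N K x / l) (h (N + Suc K) x / l))"
    using l by (intro ext) (simp add: max_def divide_le_cancel)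
  have "E_e M E (\<lambda>x. fmax h N (Suc K) x / l) \<le> E_e M E (\<lambda>x. fmax h N K x / l) + E_e M E (\<lambda>x. h (N + Suc K) x / l)"
    unfolding eq by (rule Ee_max[OF D m1 m2])
  also have "\<dots> \<le> ennreal ((2 - (1/2)^K) * (1/2)^N / l) + ennreal ((1/2)^(N + Suc K) / l)"
    by (intro add_mono Suc hb) simp
  also have "\<dots> = ennreal ((2 - (1/2)^K) * (1/2)^N / l + (1/2)^(N + Suc K) / l)"
  proof -
    have "0 \<le> (2 - (1/2::real)^K)"
    proof -
      have "(1/2::real)^K \<le> 1" by (rule power_le_one) auto
      then show ?thesis by simp
    qed
    then show ?thesis using l by (intro ennreal_plus[symmetric]) auto
  qed
  also have "\<dots> = ennreal ((2 - (1/2)^(Suc K)) * (1/2)^N / l)" using l by (simp only: half_pow_sum)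
  finally show ?case .
qed

end


lemma keyK:
  fixes M :: "'a measure" and E :: "('a \<Rightarrow> real) \<Rightarrow> ennreal" and w :: "'a \<Rightarrow> real"
  assumes sf: "sigma_finite_measure M" and D: "nonlinear_dirichlet_form M E"
    and TK: "trivial_kernel M E"
    and w: "integrable M w" and wpos: "\<And>x. x \<in> space M \<Longrightarrow> 0 < w x" and eta: "0 < \<eta>"
  shows "\<exists>\<delta>>0. \<forall>h\<in>ME M E. (\<forall>x. 0 \<le> h x \<and> h x \<le> 1) \<longrightarrow> Le_norm M E h < \<delta> \<longrightarrow>
            integral\<^sup>L M (\<lambda>x. h x * w x) < \<eta>"
proof (rule ccontr)
  assume "\<not> ?thesis"
  then have "\<forall>\<delta>>0. \<exists>h\<in>ME M E. (\<forall>x. 0 \<le> h x \<and> h x \<le> 1) \<and> Le_norm M E h < \<delta> \<and>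
            \<eta> \<le> integral\<^sup>L M (\<lambda>x. h x * w x)"
    by (auto simp: not_less; meson not_le)
  then have "\<forall>n::nat. \<exists>h\<in>ME M E. (\<forall>x. 0 \<le> h x \<and> h x \<le> 1) \<and> Le_norm M E h < (1/2)^n \<and>
            \<eta> \<le> integral\<^sup>L M (\<lambda>x. h x * w x)"
    by simp
  then obtain hs where hs: "\<And>n. hs n \<in> ME M E" "\<And>n x. 0 \<le> hs n x \<and> hs n x \<le> 1"
    "\<And>n. Le_norm M E (hs n) < (1/2)^n" "\<And>n. \<eta> \<le> integral\<^sup>L M (\<lambda>x. hs n x * w x)"
    by metis
  have hm: "\<And>n. hs n \<in> borel_measurable M" using hs(1) by (rule ME_meas[OF D])
  have wm: "w \<in> borel_measurable M" using w by auto
  have hb: "E_e M E (\<lambda>x. hs n x / l) \<le> ennreal ((1/2)^n / l)" if nl: "(1/2)^n \<le> l" for n l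
  proof -
    have S: "(1/2)^n \<in> Sset M E (hs n)" by (rule N_gt[OF D hs(1) hs(3)])
    then have e1: "E_e M E (\<lambda>x. hs n x / (1/2)^n) \<le> 1" unfolding Sset_def by auto
    have "E_e M E (\<lambda>x. hs n x / l) \<le> ennreal ((1/2)^n / l) * E_e M E (\<lambda>x. hs n x / (1/2)^n)"
      by (rule Ee_scale_down[OF D hm]) (use nl in auto)
    also have "\<dots> \<le> ennreal ((1/2)^n / l) * 1" by (rule mult_left_mono[OF e1]) simp
    finally show ?thesis by simp
  qed
  define G where "G N x = (SUP K. fmax hs N K x)" for N x
  have fb: "\<And>N K x. 0 \<le> fmax hs N K x \<and> fmax hs N K x \<le> 1" by (rule fmax_bounds) (use hs(2) in auto)
  have bddF: "bdd_above (range (\<lambda>K. fmax hs N K x))" for N x by (rule bdd_aboveI2[of _ _ 1]) (use fb in auto)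
  have Glim: "(\<lambda>K. fmax hs N K x) \<longlonglongrightarrow> G N x" for N x
    unfolding G_def by (rule LIMSEQ_incseq_SUP[OF bddF fmax_incseq])
  have Gb: "0 \<le> G N x \<and> G N x \<le> 1" for N x
  proof
    show "0 \<le> G N x" by (rule LIMSEQ_le_const[OF Glim]) (use fb in auto)
    show "G N x \<le> 1" by (rule LIMSEQ_le_const2[OF Glim]) (use fb in auto)
  qed
  have Gge: "hs N x \<le> G N x" for N x
    by (rule LIMSEQ_le_const[OF Glim]) (use fmax_ge[of hs N x] in blast)
  have Gdec: "G (Suc N) x \<le> G N x" for N x
  proof (rule LIMSEQ_le_const2[OF Glim])
    show "\<exists>N'. \<forall>n\<ge>N'. fmax hs (Suc N) n x \<le> G N x"
      by (intro exI[of _ 0] allI impI order_trans[OF fmax_shift incseq_le[OF fmax_incseq Glim]])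
  qed
  have Gm: "G N \<in> borel_measurable M" for N
    by (rule borel_measurable_LIMSEQ_real[OF Glim fmax_meas[OF hm]])
  define H where "H x = (INF N. G N x)" for x
  have Hlim: "(\<lambda>N. G N x) \<longlonglongrightarrow> H x" for x
    unfolding H_def
  proof (rule LIMSEQ_decseq_INF)
    show "bdd_below (range (\<lambda>N. G N x))" by (rule bdd_belowI2[where m=0]) (use Gb in auto)
    show "decseq (\<lambda>N. G N x)" by (rule decseq_SucI) (rule Gdec)
  qed
  have Hm: "H \<in> borel_measurable M" by (rule borel_measurable_LIMSEQ_real[OF Hlim Gm])
  have EG: "E_e M E (\<lambda>x. G N x / l) \<le> ennreal (2 * (1/2)^N / l)" if l: "0 < l" "(1/2)^N \<le> l" for N l
  proof (rule Ee_lsc[OF sf, of "\<lambda>K x. fmax hs N K x / l"])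
    show "(\<lambda>x. fmax hs N K x / l) \<in> borel_measurable M" for K using fmax_meas[OF hm] by measurable
    show "(\<lambda>x. G N x / l) \<in> borel_measurable M" using Gm by measurable
    show "loc_conv_in_measure M (\<lambda>K x. fmax hs N K x / l) (\<lambda>x. G N x / l)"
    proof (rule lc_AE)
      show "(\<lambda>x. fmax hs N K x / l) \<in> borel_measurable M" for K using fmax_meas[OF hm] by measurable
      show "(\<lambda>x. G N x / l) \<in> borel_measurable M" using Gm by measurable
      show "AE x in M. (\<lambda>K. fmax hs N K x / l) \<longlonglongrightarrow> G N x / l"
        by (rule AE_I2, rule tendsto_divide[OF Glim tendsto_const]) (use l in simp)
    qed
    fix K
    have hb': "E_e M E (\<lambda>x. hs n x / l) \<le> ennreal ((1/2)^n / l)" if "N \<le> n" for n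
    proof (rule hb)
      have "(1/2::real)^n \<le> (1/2)^N" by (rule power_decreasing[OF that]) auto
      then show "(1/2)^n \<le> l" using l by linarith
    qed
    have "E_e M E (\<lambda>x. fmax hs N K x / l) \<le> ennreal ((2 - (1/2)^K) * (1/2)^N / l)"
      by (rule fmax_Ee[OF D hm l(1) hb'])
    also have "\<dots> \<le> ennreal (2 * (1/2)^N / l)"
    proof (rule ennreal_leI)
      have a: "2 - (1/2::real)^K \<le> 2" by simp
      have b: "0 \<le> (1/2::real)^N" by simp
      show "(2 - (1/2)^K) * (1/2)^N / l \<le> 2 * (1/2)^N / l"
        by (rule divide_right_mono[OF mult_right_mono[OF a b]]) (use l in simp)
    qed
    finally show "E_e M E (\<lambda>x. fmax hs N K x / l) \<le> ennreal (2 * (1/2)^N / l)" .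
  qed
  have EH: "E_e M E (\<lambda>x. H x / l) = 0" if l: "0 < l" for l
  proof -
    have eps: "E_e M E (\<lambda>x. H x / l) \<le> 0 + ennreal e" if e: "0 < e" for e
    proof -
      have c: "0 < min l (e * l / 2)" using l e by simp
      have "eventually (\<lambda>N. (1/2::real)^N < min l (e * l / 2)) sequentially"
        by (rule order_tendstoD(2)[OF LIMSEQ_realpow_zero c]) auto
      then obtain N where N: "(1/2::real)^N < min l (e * l / 2)" by (auto simp: eventually_sequentially)
      have "E_e M E (\<lambda>x. H x / l) \<le> ennreal (2 * (1/2)^N / l)"
      proof (rule Ee_lsc[OF sf, of "\<lambda>k x. G (k + N) x / l"])
        show "(\<lambda>x. G (k + N) x / l) \<in> borel_measurable M" for k using Gm by measurable
        show "(\<lambda>x. H x / l) \<in> borel_measurable M" using Hm by measurable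
        show "loc_conv_in_measure M (\<lambda>k x. G (k + N) x / l) (\<lambda>x. H x / l)"
        proof (rule lc_AE)
          show "(\<lambda>x. G (k + N) x / l) \<in> borel_measurable M" for k using Gm by measurable
          show "(\<lambda>x. H x / l) \<in> borel_measurable M" using Hm by measurable
          show "AE x in M. (\<lambda>k. G (k + N) x / l) \<longlonglongrightarrow> H x / l"
            by (rule AE_I2, rule tendsto_divide[OF LIMSEQ_ignore_initial_segment[OF Hlim] tendsto_const]) (use l in simp)
        qed
        fix k
        have p1: "(1/2::real)^(k + N) \<le> (1/2)^N" by (rule power_decreasing) auto
        have "E_e M E (\<lambda>x. G (k + N) x / l) \<le> ennreal (2 * (1/2)^(k + N) / l)"
        proof -
          have Nl: "(1/2::real)^N < l" using N by simp
          have p2: "(1/2::real)^(k+N) \<le> l" using p1 Nl by linarith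
          show ?thesis by (rule EG[OF l p2])
        qed
        also have "\<dots> \<le> ennreal (2 * (1/2)^N / l)"
        proof (rule ennreal_leI)
          have "2 * (1/2::real)^(k + N) \<le> 2 * (1/2)^N" using p1 by simp
          then show "2 * (1/2::real)^(k + N) / l \<le> 2 * (1/2)^N / l"
            by (rule divide_right_mono) (use l in simp)
        qed
        finally show "E_e M E (\<lambda>x. G (k + N) x / l) \<le> ennreal (2 * (1/2)^N / l)" .
      qed
      also have "\<dots> \<le> ennreal e"
      proof (rule ennreal_leI)
        have "2 * (1/2::real)^N < e * l" using N by simp
        then show "2 * (1/2::real)^N / l \<le> e" unfolding pos_divide_le_eq[OF l] by (simp add: mult.commute)
      qed
      finally show ?thesis by simp
    qed
    have "E_e M E (\<lambda>x. H x / l) \<le> 0"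
    proof (rule ennreal_le_epsilon)
      fix e :: real assume "0 < e" then show "E_e M E (\<lambda>x. H x / l) \<le> 0 + ennreal e" by (rule eps)
    qed
    then show ?thesis by simp
  qed
  have HME: "H \<in> ME M E"
    unfolding ME_def
  proof (intro CollectI conjI Hm)
    show "((\<lambda>l::real. E_e M E (\<lambda>x. l * H x)) \<longlongrightarrow> 0) (at_right 0)"
    proof (rule tendsto_eventually)
      show "eventually (\<lambda>l::real. E_e M E (\<lambda>x. l * H x) = 0) (at_right 0)"
        using eventually_at_right_less[of "0::real"]
      proof (rule eventually_mono)
        fix l :: real assume l: "0 < l"
        have "(\<lambda>x. l * H x) = (\<lambda>x. H x / (1 / l))" by auto
        then show "E_e M E (\<lambda>x. l * H x) = 0" using EH[of "1/l"] l by simp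
      qed
    qed
  qed
  have HN: "Le_norm M E H = 0"
  proof (rule antisym)
    show "Le_norm M E H \<le> 0"
    proof (rule N_le)
      fix l :: real assume "0 < l" then show "l \<in> Sset M E H" unfolding Sset_def using EH[of l] by simp
    qed simp
    show "0 \<le> Le_norm M E H" by (rule N_nonneg'[OF D HME])
  qed
  have H0: "AE x in M. H x = 0" using TK HME HN unfolding trivial_kernel_def by blast
  have intG: "(\<lambda>N. integral\<^sup>L M (\<lambda>x. G N x * w x)) \<longlonglongrightarrow> integral\<^sup>L M (\<lambda>x. H x * w x)"
  proof (rule integral_dominated_convergence[OF _ _ w])
    show "(\<lambda>x. H x * w x) \<in> borel_measurable M" using Hm wm by measurable
    show "(\<lambda>x. G N x * w x) \<in> borel_measurable M" for N using Gm wm by measurable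
    show "AE x in M. (\<lambda>N. G N x * w x) \<longlonglongrightarrow> H x * w x"
      by (intro AE_I2 tendsto_mult Hlim tendsto_const)
    show "AE x in M. norm (G N x * w x) \<le> w x" for N
      using AE_space
    proof (rule eventually_mono)
      fix x assume x: "x \<in> space M"
      have "0 \<le> G N x * w x" using Gb[of N x] wpos[OF x] by simp
      moreover have "G N x * w x \<le> 1 * w x" using Gb[of N x] wpos[OF x] by (intro mult_right_mono) auto
      ultimately show "norm (G N x * w x) \<le> w x" by simp
    qed
  qed
  have geq: "\<eta> \<le> integral\<^sup>L M (\<lambda>x. G N x * w x)" for N
  proof -
    have "integral\<^sup>L M (\<lambda>x. hs N x * w x) \<le> integral\<^sup>L M (\<lambda>x. G N x * w x)"
    proof (rule integral_mono)
      show "integrable M (\<lambda>x. hs N x * w x)" by (rule int_hw[OF w hm]) (metis hs(2) abs_of_nonneg)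
      show "integrable M (\<lambda>x. G N x * w x)" by (rule int_hw[OF w Gm]) (metis Gb abs_of_nonneg)
      fix x assume x: "x \<in> space M"
      show "hs N x * w x \<le> G N x * w x" using Gge[of N x] wpos[OF x] by (intro mult_right_mono) auto
    qed
    then show ?thesis using hs(4)[of N] by simp
  qed
  have "\<eta> \<le> integral\<^sup>L M (\<lambda>x. H x * w x)"
    by (rule LIMSEQ_le_const[OF intG]) (use geq in blast)
  moreover have "integral\<^sup>L M (\<lambda>x. H x * w x) = 0"
    by (rule integral_eq_zero_AE) (use H0 in auto)
  ultimately show False using eta by simp
qed


lemma root_le:
  fixes I y p :: real
  assumes I: "0 \<le> I" and y: "0 \<le> y" and le: "I \<le> y powr p" and p: "0 < p"
  shows "I powr (1/p) \<le> y"
proof -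
  have "I powr (1/p) \<le> (y powr p) powr (1/p)" by (rule powr_mono2) (use I le p in auto)
  also have "\<dots> = y powr (p * (1/p))" by (rule powr_powr)
  also have "\<dots> = y" using p y by (simp add: powr_one)
  finally show ?thesis .
qed

lemma min_lip: "\<bar>min (\<bar>a\<bar> / s) 1 - min (\<bar>b\<bar> / s) (1::real)\<bar> \<le> (1 / s) * \<bar>a - b\<bar>" if s: "0 < s" for a b s
proof -
  have m: "\<bar>min x 1 - min y (1::real)\<bar> \<le> \<bar>x - y\<bar>" for x y by (simp add: min_def abs_if)
  have "\<bar>min (\<bar>a\<bar> / s) 1 - min (\<bar>b\<bar> / s) (1::real)\<bar> \<le> \<bar>\<bar>a\<bar> / s - \<bar>b\<bar> / s\<bar>" by (rule m)
  also have "\<dots> = \<bar>\<bar>a\<bar> - \<bar>b\<bar>\<bar> / s" using s by (simp add: diff_divide_distrib[symmetric] abs_divide)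
  also have "\<dots> \<le> \<bar>a - b\<bar> / s" by (rule divide_right_mono[OF abs_triangle_ineq3]) (use s in simp)
  finally show ?thesis by simp
qed

lemma powr_le_self: "0 \<le> h \<Longrightarrow> h \<le> 1 \<Longrightarrow> 1 \<le> p \<Longrightarrow> h powr p \<le> (h::real)"
  using powr_mono'[of 1 p h] by (simp add: powr_one)

lemma claim_r:
  fixes M :: "'a measure" and E :: "('a \<Rightarrow> real) \<Rightarrow> ennreal" and w :: "'a \<Rightarrow> real"
  assumes sf: "sigma_finite_measure M" and D: "nonlinear_dirichlet_form M E"
    and TK: "trivial_kernel M E"
    and w: "integrable M w" and wpos: "\<And>x. x \<in> space M \<Longrightarrow> 0 < w x" and p: "1 \<le> p" and r: "0 < r"
  shows "\<exists>C\<ge>1. \<forall>f\<in>ME M E \<inter> Linf M.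
     (integral\<^sup>L M (\<lambda>x. \<bar>f x\<bar> powr p * w x)) powr (1 / p) \<le> C * Le_norm M E f + r * sup_norm M f"
proof -
  have p0: "0 < p" using p by simp
  have eta: "0 < r powr p" using r by simp
  obtain \<delta> where d: "0 < \<delta>" and dK: "\<And>h. h\<in>ME M E \<Longrightarrow> (\<forall>x. 0 \<le> h x \<and> h x \<le> 1) \<Longrightarrow> Le_norm M E h < \<delta> \<Longrightarrow>
            integral\<^sup>L M (\<lambda>x. h x * w x) < r powr p"
    using keyK[OF sf D TK w wpos eta] by blast
  have wm: "w \<in> borel_measurable M" using w by auto
  define W where "W = integral\<^sup>L M w"
  have W0: "0 \<le> W" unfolding W_def by (rule Bochner_Integration.integral_nonneg) (use wpos in \<open>auto intro: less_imp_le\<close>)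
  define W' where "W' = W powr (1/p)"
  have W'0: "0 \<le> W'" unfolding W'_def by simp
  have WW: "W = W' powr p" unfolding W'_def using W0 p0 by (simp add: powr_powr)
  define C where "C = W' / \<delta> + 1"
  have C1: "1 \<le> C" unfolding C_def using W'0 d by simp
  show ?thesis
  proof (intro exI[of _ C] conjI C1 ballI)
    fix f assume f: "f \<in> ME M E \<inter> Linf M"
    have fME: "f \<in> ME M E" and fL: "f \<in> Linf M" using f by auto
    have mf: "f \<in> borel_measurable M" by (rule ME_meas[OF D fME])
    define s where "s = sup_norm M f"
    have s0: "0 \<le> s" unfolding s_def by (rule SN_nonneg[OF mf])
    have ae: "AE x in M. \<bar>f x\<bar> \<le> s" unfolding s_def by (rule SN_AE[OF fL])
    have Nf0: "0 \<le> Le_norm M E f" by (rule N_nonneg'[OF D fME])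
    define I where "I = integral\<^sup>L M (\<lambda>x. \<bar>f x\<bar> powr p * w x)"
    have mI: "(\<lambda>x. \<bar>f x\<bar> powr p * w x) \<in> borel_measurable M" using mf wm by measurable
    have intI: "integrable M (\<lambda>x. \<bar>f x\<bar> powr p * w x)"
    proof (rule Bochner_Integration.integrable_bound[OF integrable_mult_right[OF w, of "s powr p"] mI])
      show "AE x in M. norm (\<bar>f x\<bar> powr p * w x) \<le> norm (s powr p * w x)"
        using ae AE_space
      proof (eventually_elim)
        case (elim x)
        have "\<bar>f x\<bar> powr p \<le> s powr p" by (rule powr_mono2) (use elim p0 in auto)
        then have "\<bar>f x\<bar> powr p * w x \<le> s powr p * w x"
          by (rule mult_right_mono) (use wpos[OF elim(2)] in simp)
        then show ?case using wpos[OF elim(2)] by simp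
      qed
    qed
    have I0: "0 \<le> I" unfolding I_def by (rule Bochner_Integration.integral_nonneg) (metis wpos less_imp_le mult_nonneg_nonneg powr_ge_zero)
    have main: "I powr (1 / p) \<le> C * Le_norm M E f + r * s"
    proof (cases "s = 0")
      case True
      have "AE x in M. \<bar>f x\<bar> powr p * w x = 0" using ae True by (auto elim: eventually_mono)
      then have "I = 0" unfolding I_def by (rule integral_eq_zero_AE)
      then show ?thesis using True C1 Nf0 by simp
    next
      case False
      then have s: "0 < s" using s0 by simp
      define h where "h x = min (\<bar>f x\<bar> / s) 1" for x
      have hlip: "(\<lambda>x. (\<lambda>t. min (\<bar>t\<bar> / s) 1) (f x)) \<in> ME M E \<and>
          Le_norm M E (\<lambda>x. (\<lambda>t. min (\<bar>t\<bar> / s) 1) (f x)) \<le> (1 / s) * Le_norm M E f"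
        by (rule lip_ME_N[OF D fME]) (use s min_lip in auto)
      have hME: "h \<in> ME M E" and hN: "Le_norm M E h \<le> (1 / s) * Le_norm M E f"
        using hlip unfolding h_def by auto
      have hm: "h \<in> borel_measurable M" by (rule ME_meas[OF D hME])
      have hb: "0 \<le> h x \<and> h x \<le> 1" for x unfolding h_def using s by auto
      have inth: "integrable M (\<lambda>x. h x * w x)" by (rule int_hw[OF w hm]) (metis hb abs_of_nonneg)
      define J where "J = integral\<^sup>L M (\<lambda>x. h x * w x)"
      have IJ: "I \<le> s powr p * J"
      proof -
        have "I \<le> integral\<^sup>L M (\<lambda>x. s powr p * (h x * w x))"
          unfolding I_def
        proof (rule integral_mono_AE[OF intI integrable_mult_right[OF inth]])
          show "AE x in M. \<bar>f x\<bar> powr p * w x \<le> s powr p * (h x * w x)"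
            using ae AE_space
          proof (eventually_elim)
            case (elim x)
            have hx: "h x = \<bar>f x\<bar> / s" unfolding h_def using elim s by simp
            have fx: "\<bar>f x\<bar> = s * h x" unfolding hx using s by simp
            have "\<bar>f x\<bar> powr p = s powr p * h x powr p" unfolding fx using s hb[of x] by (simp add: powr_mult)
            also have "\<dots> \<le> s powr p * h x" 
              by (rule mult_left_mono[OF powr_le_self]) (use hb[of x] p in auto)
            finally have "\<bar>f x\<bar> powr p * w x \<le> s powr p * h x * w x"
              by (rule mult_right_mono) (use wpos[OF elim(2)] in simp)
            then show ?case by (simp add: mult.assoc)
          qed
        qed
        also have "\<dots> = s powr p * J" unfolding J_def by simp
        finally show ?thesis .
      qed
      show ?thesis
      proof (cases "Le_norm M E h < \<delta>")
        case True
        have J: "J < r powr p" unfolding J_def by (rule dK[OF hME _ True]) (use hb in auto)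
        have "I \<le> s powr p * r powr p"
          using IJ J by (meson less_imp_le mult_left_mono order_trans powr_ge_zero)
        also have "\<dots> = (s * r) powr p" using s r by (simp add: powr_mult)
        finally have le: "I \<le> (s * r) powr p" .
        have "I powr (1/p) \<le> s * r" by (rule root_le[OF I0 _ le p0]) (use s r in simp)
        also have "\<dots> \<le> C * Le_norm M E f + r * s" using C1 Nf0 by (simp add: mult.commute)
        finally show ?thesis .
      next
        case False
        then have dh: "\<delta> \<le> (1 / s) * Le_norm M E f" using hN by simp
        then have sd: "s \<le> Le_norm M E f / \<delta>" using s d by (simp add: field_simps)
        have JW: "J \<le> W" unfolding J_def W_def
        proof (rule integral_mono[OF inth w])
          fix x assume x: "x \<in> space M"
          show "h x * w x \<le> w x" using hb[of x] wpos[OF x] by (simp add: mult_left_le_one_le)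
        qed
        have "I \<le> s powr p * W"
          using IJ JW by (meson mult_left_mono order_trans powr_ge_zero)
        also have "\<dots> = (s * W') powr p" unfolding WW using s W'0 by (simp add: powr_mult)
        finally have le: "I \<le> (s * W') powr p" .
        have "I powr (1/p) \<le> s * W'" by (rule root_le[OF I0 _ le p0]) (use s W'0 in simp)
        also have "\<dots> \<le> (Le_norm M E f / \<delta>) * W'" by (rule mult_right_mono[OF sd W'0])
        also have "\<dots> \<le> C * Le_norm M E f"
        proof -
          have "(Le_norm M E f / \<delta>) * W' = (W' / \<delta>) * Le_norm M E f" by simp
          also have "\<dots> \<le> C * Le_norm M E f" unfolding C_def by (rule mult_right_mono[OF _ Nf0]) simp
          finally show ?thesis .
        qed
        also have "\<dots> \<le> C * Le_norm M E f + r * s" using r s by simp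
        finally show ?thesis .
      qed
    qed
    then show "(integral\<^sup>L M (\<lambda>x. \<bar>f x\<bar> powr p * w x)) powr (1 / p) \<le> C * Le_norm M E f + r * sup_norm M f"
      unfolding I_def s_def .
  qed
qed


lemma TK_weighted:
  fixes M :: "'a measure" and E :: "('a \<Rightarrow> real) \<Rightarrow> ennreal" and w :: "'a \<Rightarrow> real"
  assumes sf: "sigma_finite_measure M" and D: "nonlinear_dirichlet_form M E"
    and TK: "trivial_kernel M E" and adm: "admissible_weight M w" and p: "1 \<le> p"
  shows "weighted_estimate M E w p"
proof -
  have w: "integrable M w" and wpos: "\<And>x. x \<in> space M \<Longrightarrow> 0 < w x"
    using adm unfolding admissible_weight_def by auto
  define A where "A f = (integral\<^sup>L M (\<lambda>x. \<bar>f x\<bar> powr p * w x)) powr (1 / p)" for f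
  define V where "V r = {C. 1 \<le> C \<and> (\<forall>f\<in>ME M E \<inter> Linf M. A f \<le> C * Le_norm M E f + r * sup_norm M f)}" for r
  define \<alpha> where "\<alpha> r = Inf (V r)" for r
  have Vne: "V r \<noteq> {}" if r: "0 < r" for r
    using claim_r[OF sf D TK w wpos p r] unfolding V_def A_def by auto
  have Vbdd: "bdd_below (V r)" for r unfolding V_def by (rule bdd_belowI[of _ 1]) auto
  have \<alpha>1: "1 \<le> \<alpha> r" if r: "0 < r" for r
    unfolding \<alpha>_def by (rule cInf_greatest[OF Vne[OF r]]) (auto simp: V_def)
  have SN0: "0 \<le> sup_norm M f" if "f \<in> Linf M" for f
    using that unfolding Linf_def by (auto intro: SN_nonneg)
  have mono: "\<alpha> s \<le> \<alpha> r" if rs: "0 < r" "r \<le> s" for r s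
    unfolding \<alpha>_def
  proof (rule cInf_superset_mono[OF Vne[OF rs(1)] Vbdd])
    show "V r \<subseteq> V s"
    proof
      fix C assume C: "C \<in> V r"
      have "A f \<le> C * Le_norm M E f + s * sup_norm M f" if f: "f \<in> ME M E \<inter> Linf M" for f
      proof -
        have "A f \<le> C * Le_norm M E f + r * sup_norm M f" using C f unfolding V_def by auto
        also have "r * sup_norm M f \<le> s * sup_norm M f"
          by (rule mult_right_mono[OF rs(2) SN0]) (use f in auto)
        finally show ?thesis by simp
      qed
      then show "C \<in> V s" using C unfolding V_def by auto
    qed
  qed
  have est: "A f \<le> \<alpha> r * Le_norm M E f + r * sup_norm M f" if r: "0 < r" and f: "f \<in> ME M E \<inter> Linf M" for r f
  proof -
    have N0: "0 \<le> Le_norm M E f" using N_nonneg'[OF D] f by auto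
    show ?thesis
    proof (cases "Le_norm M E f = 0")
      case True
      obtain C where "C \<in> V r" using Vne[OF r] by auto
      then have "A f \<le> C * Le_norm M E f + r * sup_norm M f" using f unfolding V_def by auto
      then show ?thesis using True by simp
    next
      case False
      then have Np: "0 < Le_norm M E f" using N0 by simp
      have "(A f - r * sup_norm M f) / Le_norm M E f \<le> \<alpha> r"
        unfolding \<alpha>_def
      proof (rule cInf_greatest[OF Vne[OF r]])
        fix C assume "C \<in> V r"
        then have "A f \<le> C * Le_norm M E f + r * sup_norm M f" using f unfolding V_def by auto
        then show "(A f - r * sup_norm M f) / Le_norm M E f \<le> C"
          using Np by (simp add: pos_divide_le_eq)
      qed
      then show ?thesis using Np by (simp add: pos_divide_le_eq)
    qed
  qed
  show ?thesis unfolding weighted_estimate_def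
  proof (intro exI[of _ \<alpha>] conjI allI impI ballI)
    fix r :: real assume "0 < r" then show "0 < \<alpha> r" using \<alpha>1 by (meson less_le_trans zero_less_one)
  next
    fix r s :: real assume "0 < r \<and> r \<le> s" then show "\<alpha> s \<le> \<alpha> r" using mono by auto
  next
    fix r :: real and f assume "0 < r" "f \<in> ME M E \<inter> Linf M"
    then show "(integral\<^sup>L M (\<lambda>x. \<bar>f x\<bar> powr p * w x)) powr (1 / p) \<le> \<alpha> r * Le_norm M E f + r * sup_norm M f"
      using est unfolding A_def by blast
  qed
qed

lemma weighted_TK:
  fixes M :: "'a measure" and E :: "('a \<Rightarrow> real) \<Rightarrow> ennreal" and w :: "'a \<Rightarrow> real"
  assumes D: "nonlinear_dirichlet_form M E"
    and adm: "admissible_weight M w" and p: "1 \<le> p" and WE: "weighted_estimate M E w p"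
  shows "trivial_kernel M E"
  unfolding trivial_kernel_def
proof (intro ballI impI)
  fix f assume fME: "f \<in> ME M E" and Nf: "Le_norm M E f = 0"
  have w: "integrable M w" and wpos: "\<And>x. x \<in> space M \<Longrightarrow> 0 < w x"
    using adm unfolding admissible_weight_def by auto
  have wm: "w \<in> borel_measurable M" using w by auto
  have p0: "0 < p" using p by simp
  obtain \<alpha> :: "real \<Rightarrow> real" where est: "\<And>r h. 0 < r \<Longrightarrow> h \<in> ME M E \<inter> Linf M \<Longrightarrow>
      (integral\<^sup>L M (\<lambda>x. \<bar>h x\<bar> powr p * w x)) powr (1 / p) \<le> \<alpha> r * Le_norm M E h + r * sup_norm M h"
    using WE unfolding weighted_estimate_def by blast
  define h where "h x = min (\<bar>f x\<bar> / 1) 1" for x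
  have one: "(0::real) < 1" by simp
  have hlip: "(\<lambda>x. (\<lambda>t. min (\<bar>t\<bar> / 1) 1) (f x)) \<in> ME M E \<and>
      Le_norm M E (\<lambda>x. (\<lambda>t. min (\<bar>t\<bar> / 1) 1) (f x)) \<le> 1 * Le_norm M E f"
    by (rule lip_ME_N[OF D fME one, where P="\<lambda>t. min (\<bar>t\<bar> / 1) 1"]) (use min_lip[OF one] in auto)
  have hME: "h \<in> ME M E" and hN': "Le_norm M E h \<le> 1 * Le_norm M E f"
    using hlip unfolding h_def by auto
  have hN: "Le_norm M E h = 0" using hN' Nf N_nonneg'[OF D hME] by simp
  have hm: "h \<in> borel_measurable M" by (rule ME_meas[OF D hME])
  have hb: "0 \<le> h x \<and> h x \<le> 1" for x unfolding h_def by auto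
  have hL: "h \<in> Linf M" by (rule Linf_bounded[OF hm]) (use hb in \<open>auto simp: abs_le_iff\<close>)
  have Sh: "sup_norm M h \<le> 1" by (rule SN_le[OF hm]) (use hb in auto)
  define I where "I = integral\<^sup>L M (\<lambda>x. \<bar>h x\<bar> powr p * w x)"
  have Ir: "I powr (1 / p) \<le> r" if r: "0 < r" for r
  proof -
    have "I powr (1 / p) \<le> \<alpha> r * Le_norm M E h + r * sup_norm M h"
      unfolding I_def by (rule est[OF r]) (use hME hL in auto)
    also have "\<dots> \<le> r" using hN Sh r by simp
    finally show ?thesis .
  qed
  have "I powr (1 / p) \<le> 0"
  proof (rule ccontr)
    assume "\<not> I powr (1 / p) \<le> 0"
    then have a: "0 < I powr (1 / p)" by simp
    have "I powr (1 / p) \<le> I powr (1 / p) / 2" by (rule Ir) (use a in simp)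
    then show False using a by simp
  qed
  then have "I powr (1/p) = 0" by (meson antisym powr_ge_zero)
  then have I0: "I = 0" by simp
  have mI: "(\<lambda>x. \<bar>h x\<bar> powr p * w x) \<in> borel_measurable M" using hm wm by measurable
  have intI: "integrable M (\<lambda>x. \<bar>h x\<bar> powr p * w x)"
  proof (rule Bochner_Integration.integrable_bound[OF w mI])
    show "AE x in M. norm (\<bar>h x\<bar> powr p * w x) \<le> norm (w x)"
      using AE_space
    proof (rule eventually_mono)
      fix x assume x: "x \<in> space M"
      have "\<bar>h x\<bar> powr p \<le> 1" by (rule powr_le1) (use hb[of x] p in auto)
      then have "\<bar>h x\<bar> powr p * w x \<le> 1 * w x" by (rule mult_right_mono) (use wpos[OF x] in simp)
      then show "norm (\<bar>h x\<bar> powr p * w x) \<le> norm (w x)" using wpos[OF x] by simp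
    qed
  qed
  have "AE x in M. \<bar>h x\<bar> powr p * w x = 0"
  proof -
    have nn: "AE x in M. 0 \<le> \<bar>h x\<bar> powr p * w x"
      using AE_space by (rule eventually_mono) (use wpos in \<open>simp add: less_imp_le\<close>)
    show ?thesis using I0 integral_nonneg_eq_0_iff_AE[OF intI nn] unfolding I_def by simp
  qed
  then show "AE x in M. f x = 0"
    using AE_space
  proof (eventually_elim)
    case (elim x)
    then have "h x = 0" using wpos[OF elim(2)] by simp
    then show "f x = 0" unfolding h_def by (simp add: min_def split: if_splits)
  qed
qed

lemma cont_TK:
  fixes M :: "'a measure" and E :: "('a \<Rightarrow> real) \<Rightarrow> ennreal"
  assumes sf: "sigma_finite_measure M" and D: "nonlinear_dirichlet_form M E"
    and EC: "embedding_continuous M E"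
  shows "trivial_kernel M E"
  unfolding trivial_kernel_def
proof (intro ballI impI)
  fix f assume fME: "f \<in> ME M E" and Nf: "Le_norm M E f = 0"
  have mf: "f \<in> borel_measurable M" by (rule ME_meas[OF D fME])
  have z: "(\<lambda>x. 0) \<in> ME M E" using ME_zero[OF D] by blast
  have eq: "(\<lambda>x. f x - 0) = f" by simp
  have lc: "loc_conv_in_measure M (\<lambda>n. f) (\<lambda>x. 0)"
    using EC fME z Nf unfolding embedding_continuous_def eq by simp
  obtain A :: "nat \<Rightarrow> 'a set" where A: "range A \<subseteq> sets M" "(\<Union>i. A i) = space M"
    "\<And>i. emeasure M (A i) \<noteq> \<infinity>" "incseq A"
    using sigma_finite_measure.sigma_finite_incseq[OF sf] by metis
  have null: "AE x in M. x \<notin> {x \<in> space M. inverse (real (Suc k)) < \<bar>f x - 0\<bar>} \<inter> A j" for j k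
  proof (rule AE_not_in)
    have Aj: "A j \<in> sets M" "emeasure M (A j) < \<infinity>" using A(1) A(3)[of j] by (auto simp: less_top)
    have ik: "(0::real) < inverse (real (Suc k))" by simp
    have "(\<lambda>n. emeasure M ({x \<in> space M. inverse (real (Suc k)) < \<bar>f x - 0\<bar>} \<inter> A j)) \<longlonglongrightarrow> 0"
      using lc[unfolded loc_conv_in_measure_def, rule_format, OF Aj ik] .
    then have "emeasure M ({x \<in> space M. inverse (real (Suc k)) < \<bar>f x - 0\<bar>} \<inter> A j) = 0"
      by (simp add: LIMSEQ_const_iff)
    moreover have "{x \<in> space M. inverse (real (Suc k)) < \<bar>f x - 0\<bar>} \<inter> A j \<in> sets M"
    proof -
      have [measurable]: "f \<in> borel_measurable M" by (rule mf)
      have [measurable]: "A j \<in> sets M" by (rule Aj(1))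
      show ?thesis by measurable
    qed
    ultimately show "{x \<in> space M. inverse (real (Suc k)) < \<bar>f x - 0\<bar>} \<inter> A j \<in> null_sets M" by auto
  qed
  have "AE x in M. \<forall>j k. x \<notin> {x \<in> space M. inverse (real (Suc k)) < \<bar>f x - 0\<bar>} \<inter> A j"
    by (subst AE_all_countable, rule allI, subst AE_all_countable, rule allI, rule null)
  then show "AE x in M. f x = 0"
    using AE_space
  proof (eventually_elim)
    case (elim x)
    obtain j where j: "x \<in> A j" using A(2) elim(2) by auto
    show "f x = 0"
    proof (rule ccontr)
      assume "f x \<noteq> 0"
      then have "0 < \<bar>f x\<bar>" by simp
      then obtain k where k: "inverse (real (Suc k)) < \<bar>f x\<bar>" using reals_Archimedean by blast
      have "x \<notin> {x \<in> space M. inverse (real (Suc k)) < \<bar>f x - 0\<bar>} \<inter> A j" using elim(1) by blast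
      then show False using k j elim(2) by simp
    qed
  qed
qed


lemma conv_w:
  fixes w :: "'a \<Rightarrow> real" and g :: "nat \<Rightarrow> 'a \<Rightarrow> real"
  assumes wm: "w \<in> borel_measurable M" and wpos: "\<And>x. x \<in> space M \<Longrightarrow> 0 < w x"
    and gm: "\<And>n. g n \<in> borel_measurable M" and gnn: "\<And>n x. 0 \<le> g n x"
    and gi: "\<And>n. integrable M (\<lambda>x. g n x * w x)"
    and lim: "(\<lambda>n. integral\<^sup>L M (\<lambda>x. g n x * w x)) \<longlonglongrightarrow> 0"
    and A: "A \<in> sets M" "emeasure M A < \<infinity>" and e: "0 < \<epsilon>"
  shows "(\<lambda>n. emeasure M ({x \<in> space M. \<epsilon> < g n x} \<inter> A)) \<longlonglongrightarrow> 0"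
proof (rule order_tendstoI)
  fix a :: ennreal assume "a < 0" then show "eventually (\<lambda>n. a < emeasure M ({x \<in> space M. \<epsilon> < g n x} \<inter> A)) sequentially"
    by simp
next
  fix a :: ennreal assume a: "0 < a"
  obtain c :: real where c: "0 < c" "ennreal (2 * c) < a"
  proof (cases "a = top")
    case True
    show ?thesis by (rule that[of 1]) (use True in simp_all)
  next
    case False
    then obtain a' where a': "a = ennreal a'" "0 \<le> a'" by (cases a rule: ennreal_cases) auto
    then have a'0: "0 < a'" using a by simp
    show ?thesis by (rule that[of "a' / 4"]) (use a' a'0 in \<open>simp_all add: ennreal_less_iff\<close>)
  qed
  define Dj where "Dj j = {x \<in> space M. w x \<le> inverse (real (Suc j))} \<inter> A" for j
  have Ds: "Dj j \<in> sets M" for j unfolding Dj_def using wm A(1) by measurable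
  have Ddec: "decseq Dj" unfolding Dj_def decseq_def
  proof (intro allI impI subsetI)
    fix m n x assume mn: "m \<le> n" and x: "x \<in> {x \<in> space M. w x \<le> inverse (real (Suc n))} \<inter> A"
    have "inverse (real (Suc n)) \<le> inverse (real (Suc m))" using mn by (simp add: le_imp_inverse_le)
    then show "x \<in> {x \<in> space M. w x \<le> inverse (real (Suc m))} \<inter> A"
      using x order_trans[of "w x" "inverse (real (Suc n))" "inverse (real (Suc m))"] by blast
  qed
  have DA: "Dj j \<subseteq> A" for j unfolding Dj_def by auto
  have Dfin: "emeasure M (Dj j) \<noteq> \<infinity>" for j
  proof -
    have "emeasure M (Dj j) < \<infinity>" using emeasure_mono[OF DA A(1)] A(2) by (rule le_less_trans)
    then show ?thesis by simp
  qed
  have "(\<lambda>j. emeasure M (Dj j)) \<longlonglongrightarrow> emeasure M (\<Inter>j. Dj j)"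
    by (rule Lim_emeasure_decseq) (use Ds Ddec Dfin in auto)
  moreover have "(\<Inter>j. Dj j) = {}"
  proof (rule ccontr)
    assume "(\<Inter>j. Dj j) \<noteq> {}"
    then obtain x where x: "\<And>j. x \<in> Dj j" by auto
    then have xs: "x \<in> space M" unfolding Dj_def by auto
    obtain j where "inverse (real (Suc j)) < w x" using reals_Archimedean[OF wpos[OF xs]] by auto
    then show False using x[of j] unfolding Dj_def by auto
  qed
  ultimately have "(\<lambda>j. emeasure M (Dj j)) \<longlonglongrightarrow> 0" by simp
  then have "eventually (\<lambda>j. emeasure M (Dj j) < ennreal c) sequentially"
    by (rule order_tendstoD(2)) (use c in simp)
  then obtain j where j: "emeasure M (Dj j) < ennreal c" by (auto simp: eventually_sequentially)
  define \<eta> where "\<eta> = inverse (real (Suc j))"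
  have \<eta>: "0 < \<eta>" unfolding \<eta>_def by simp
  have ec: "0 < \<epsilon> * \<eta> * c" using e \<eta> c by simp
  have "eventually (\<lambda>n. integral\<^sup>L M (\<lambda>x. g n x * w x) < \<epsilon> * \<eta> * c) sequentially"
    by (rule order_tendstoD(2)[OF lim ec])
  then show "eventually (\<lambda>n. emeasure M ({x \<in> space M. \<epsilon> < g n x} \<inter> A) < a) sequentially"
  proof (rule eventually_mono)
    fix n assume n: "integral\<^sup>L M (\<lambda>x. g n x * w x) < \<epsilon> * \<eta> * c"
    define Q where "Q = {x \<in> space M. \<epsilon> * \<eta> \<le> g n x * w x}"
    have Qs: "Q \<in> sets M" unfolding Q_def using gm wm by measurable
    have sub: "{x \<in> space M. \<epsilon> < g n x} \<inter> A \<subseteq> Dj j \<union> Q"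
    proof
      fix x assume x: "x \<in> {x \<in> space M. \<epsilon> < g n x} \<inter> A"
      show "x \<in> Dj j \<union> Q"
      proof (cases "w x \<le> \<eta>")
        case True then show ?thesis using x unfolding Dj_def \<eta>_def by auto
      next
        case False
        then have "\<epsilon> * \<eta> \<le> g n x * w x" using x e \<eta> by (intro mult_mono) auto
        then show ?thesis using x unfolding Q_def by auto
      qed
    qed
    have Mk: "emeasure M Q \<le> ennreal ((1 / (\<epsilon> * \<eta>)) * integral\<^sup>L M (\<lambda>x. g n x * w x))"
      unfolding Q_def
    proof (rule integral_Markov_inequality[OF gi])
      show "AE x in M. 0 \<le> g n x * w x"
        using AE_space by (rule eventually_mono) (use gnn wpos in \<open>simp add: less_imp_le\<close>)
      show "0 < \<epsilon> * \<eta>" using e \<eta> by simp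
    qed
    have "(1 / (\<epsilon> * \<eta>)) * integral\<^sup>L M (\<lambda>x. g n x * w x) < c"
      using n e \<eta> by (simp add: field_simps)
    then have Mk': "emeasure M Q \<le> ennreal c" using Mk by (meson ennreal_leI less_imp_le order_trans)
    have "emeasure M ({x \<in> space M. \<epsilon> < g n x} \<inter> A) \<le> emeasure M (Dj j \<union> Q)"
      by (rule emeasure_mono[OF sub]) (use Ds Qs in auto)
    also have "\<dots> \<le> emeasure M (Dj j) + emeasure M Q" by (rule emeasure_subadditive[OF Ds Qs])
    also have "\<dots> \<le> ennreal c + ennreal c" using j Mk' by (intro add_mono) auto
    also have "\<dots> = ennreal (2 * c)" using c by (simp add: ennreal_plus[symmetric])
    also have "\<dots> < a" by (rule c(2))
    finally show "emeasure M ({x \<in> space M. \<epsilon> < g n x} \<inter> A) < a" .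
  qed
qed


lemma ex_w:
  assumes sf: "sigma_finite_measure M"
  shows "\<exists>w :: 'a \<Rightarrow> real. admissible_weight M w \<and> w \<in> borel_measurable M \<and> (\<forall>x. 0 < w x) \<and> integrable M w"
proof -
  obtain w :: "'a \<Rightarrow> real" where w: "w \<in> borel_measurable M" "\<And>x. 0 < w x" "\<And>x. w x \<le> 1" "integrable M w"
    using sigma_finite_measure.obtain_positive_integrable_function[OF sf] by metis
  then have "admissible_weight M w" unfolding admissible_weight_def by auto
  then show ?thesis using w by blast
qed

lemma trunc_facts:
  fixes M :: "'a measure" and E :: "('a \<Rightarrow> real) \<Rightarrow> ennreal"
  assumes D: "nonlinear_dirichlet_form M E" and d: "d \<in> ME M E"
  shows "(\<lambda>x. min (\<bar>d x\<bar> / 1) 1) \<in> ME M E \<and> Le_norm M E (\<lambda>x. min (\<bar>d x\<bar> / 1) 1) \<le> Le_norm M E d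
     \<and> (\<lambda>x. min (\<bar>d x\<bar> / 1) 1) \<in> Linf M \<and> sup_norm M (\<lambda>x. min (\<bar>d x\<bar> / 1) 1) \<le> 1"
proof -
  have one: "(0::real) < 1" by simp
  have hlip: "(\<lambda>x. (\<lambda>t. min (\<bar>t\<bar> / 1) 1) (d x)) \<in> ME M E \<and>
      Le_norm M E (\<lambda>x. (\<lambda>t. min (\<bar>t\<bar> / 1) 1) (d x)) \<le> 1 * Le_norm M E d"
    by (rule lip_ME_N[OF D d one, where P="\<lambda>t. min (\<bar>t\<bar> / 1) 1"]) (use min_lip[OF one] in auto)
  then have hME: "(\<lambda>x. min (\<bar>d x\<bar> / 1) 1) \<in> ME M E" by simp
  have hm: "(\<lambda>x. min (\<bar>d x\<bar> / 1) 1) \<in> borel_measurable M" by (rule ME_meas[OF D hME])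
  have hL: "(\<lambda>x. min (\<bar>d x\<bar> / 1) 1) \<in> Linf M" by (rule Linf_bounded[OF hm, of 1]) auto
  have hS: "sup_norm M (\<lambda>x. min (\<bar>d x\<bar> / 1) (1::real)) \<le> 1" by (rule SN_le[OF hm]) auto
  show ?thesis using hlip hL hS by simp
qed

lemma est1:
  fixes M :: "'a measure" and E :: "('a \<Rightarrow> real) \<Rightarrow> ennreal" and w :: "'a \<Rightarrow> real"
  assumes D: "nonlinear_dirichlet_form M E" and WE: "weighted_estimate M E w 1"
    and w: "integrable M w" and wpos: "\<And>x. x \<in> space M \<Longrightarrow> 0 < w x"
  shows "\<exists>\<alpha> :: real \<Rightarrow> real. (\<forall>r. 0 < r \<longrightarrow> 0 < \<alpha> r) \<and>
    (\<forall>r d. 0 < r \<longrightarrow> d \<in> ME M E \<longrightarrow>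
       integral\<^sup>L M (\<lambda>x. min (\<bar>d x\<bar> / 1) 1 * w x) \<le> \<alpha> r * Le_norm M E d + r) \<and>
    (\<forall>d. d \<in> ME M E \<longrightarrow> integrable M (\<lambda>x. min (\<bar>d x\<bar> / 1) 1 * w x))"
proof -
  obtain \<alpha> :: "real \<Rightarrow> real" where \<alpha>0: "\<And>r. 0 < r \<Longrightarrow> 0 < \<alpha> r" and est: "\<And>r h. 0 < r \<Longrightarrow> h \<in> ME M E \<inter> Linf M \<Longrightarrow>
      (integral\<^sup>L M (\<lambda>x. \<bar>h x\<bar> powr 1 * w x)) powr (1 / 1) \<le> \<alpha> r * Le_norm M E h + r * sup_norm M h"
    using WE unfolding weighted_estimate_def by blast
  have int: "integrable M (\<lambda>x. min (\<bar>d x\<bar> / 1) 1 * w x)" if d: "d \<in> ME M E" for d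
  proof -
    have "(\<lambda>x. min (\<bar>d x\<bar> / 1) 1) \<in> ME M E" using trunc_facts[OF D d] by blast
    then have "(\<lambda>x. min (\<bar>d x\<bar> / 1) (1::real)) \<in> borel_measurable M" by (rule ME_meas[OF D])
    then show ?thesis by (rule int_hw[OF w]) auto
  qed
  have "integral\<^sup>L M (\<lambda>x. min (\<bar>d x\<bar> / 1) 1 * w x) \<le> \<alpha> r * Le_norm M E d + r"
    if r: "0 < r" and d: "d \<in> ME M E" for r d
  proof -
    note T = trunc_facts[OF D d]
    define t where "t x = min (\<bar>d x\<bar> / 1) (1::real)" for x
    have tME: "t \<in> ME M E" and tN: "Le_norm M E t \<le> Le_norm M E d" and tL: "t \<in> Linf M"
      and tS: "sup_norm M t \<le> 1" using T unfolding t_def by auto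
    have t0: "0 \<le> t x" for x unfolding t_def by simp
    have eq1: "(\<lambda>x. \<bar>t x\<bar> powr 1 * w x) = (\<lambda>x. t x * w x)" using t0 by (simp add: abs_of_nonneg)
    have I0: "0 \<le> integral\<^sup>L M (\<lambda>x. t x * w x)"
      by (rule Bochner_Integration.integral_nonneg) (metis t0 wpos less_imp_le mult_nonneg_nonneg)
    have "integral\<^sup>L M (\<lambda>x. t x * w x) = (integral\<^sup>L M (\<lambda>x. \<bar>t x\<bar> powr 1 * w x)) powr (1 / 1)"
      unfolding eq1 using I0 by simp
    also have "\<dots> \<le> \<alpha> r * Le_norm M E t + r * sup_norm M t" by (rule est[OF r]) (use tME tL in auto)
    also have "\<dots> \<le> \<alpha> r * Le_norm M E d + r * 1"
      by (intro add_mono mult_left_mono tN tS) (use \<alpha>0[OF r] r in auto)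
    finally show ?thesis unfolding t_def by simp
  qed
  then show ?thesis using \<alpha>0 int by blast
qed

lemma TK_cont:
  fixes M :: "'a measure" and E :: "('a \<Rightarrow> real) \<Rightarrow> ennreal"
  assumes sf: "sigma_finite_measure M" and D: "nonlinear_dirichlet_form M E"
    and TK: "trivial_kernel M E"
  shows "embedding_continuous M E"
  unfolding embedding_continuous_def
proof (intro allI impI, elim conjE)
  fix u f assume u: "\<forall>n. u n \<in> ME M E" and fME: "f \<in> ME M E"
    and lim: "(\<lambda>n. Le_norm M E (\<lambda>x. u n x - f x)) \<longlonglongrightarrow> 0"
  from ex_w[OF sf] obtain w :: "'a \<Rightarrow> real" where adm: "admissible_weight M w" and wm: "w \<in> borel_measurable M"
    and wpos': "\<forall>x. 0 < w x" and w: "integrable M w" by blast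
  have wpos: "\<And>x. 0 < w x" using wpos' by blast
  have WE: "weighted_estimate M E w 1" by (rule TK_weighted[OF sf D TK adm]) simp
  from est1[OF D WE w wpos] obtain \<alpha> :: "real \<Rightarrow> real" where \<alpha>0': "\<forall>r. 0 < r \<longrightarrow> 0 < \<alpha> r"
    and est': "\<forall>r d. 0 < r \<longrightarrow> d \<in> ME M E \<longrightarrow>
       integral\<^sup>L M (\<lambda>x. min (\<bar>d x\<bar> / 1) 1 * w x) \<le> \<alpha> r * Le_norm M E d + r"
    and int': "\<forall>d. d \<in> ME M E \<longrightarrow> integrable M (\<lambda>x. min (\<bar>d x\<bar> / 1) 1 * w x)"
    by blast
  note \<alpha>0 = \<alpha>0'[rule_format] and est = est'[rule_format] and int = int'[rule_format]
  define d where "d n x = u n x - f x" for n x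
  have dME: "d n \<in> ME M E" for n unfolding d_def by (rule ME_diff_N[OF D u[rule_format] fME])
  have dm: "d n \<in> borel_measurable M" for n by (rule ME_meas[OF D dME])
  define t where "t n x = min (\<bar>d n x\<bar> / 1) (1::real)" for n x
  have tm: "t n \<in> borel_measurable M" for n
  proof -
    have [measurable]: "d n \<in> borel_measurable M" by (rule dm)
    show ?thesis unfolding t_def by measurable
  qed
  have t0: "0 \<le> t n x" for n x unfolding t_def by simp
  have limd: "(\<lambda>n. Le_norm M E (d n)) \<longlonglongrightarrow> 0" using lim unfolding d_def .
  have Nd0: "0 \<le> Le_norm M E (d n)" for n by (rule N_nonneg'[OF D dME])
  have limI: "(\<lambda>n. integral\<^sup>L M (\<lambda>x. t n x * w x)) \<longlonglongrightarrow> 0"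
  proof (rule order_tendstoI)
    fix a :: real assume a: "a < 0"
    show "eventually (\<lambda>n. a < integral\<^sup>L M (\<lambda>x. t n x * w x)) sequentially"
    proof (rule always_eventually, rule allI)
      fix n
      have "0 \<le> integral\<^sup>L M (\<lambda>x. t n x * w x)"
        by (rule Bochner_Integration.integral_nonneg) (metis t0 wpos less_imp_le mult_nonneg_nonneg)
      then show "a < integral\<^sup>L M (\<lambda>x. t n x * w x)" using a by simp
    qed
  next
    fix a :: real assume a: "0 < a"
    define r where "r = a / 2"
    have r: "0 < r" unfolding r_def using a by simp
    have c: "0 < r / \<alpha> r" using r \<alpha>0[OF r] by simp
    have "eventually (\<lambda>n. Le_norm M E (d n) < r / \<alpha> r) sequentially"
      by (rule order_tendstoD(2)[OF limd c])
    then show "eventually (\<lambda>n. integral\<^sup>L M (\<lambda>x. t n x * w x) < a) sequentially"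
    proof (rule eventually_mono)
      fix n assume n: "Le_norm M E (d n) < r / \<alpha> r"
      have "\<alpha> r * Le_norm M E (d n) < r" using n \<alpha>0[OF r] by (simp add: field_simps)
      moreover have "integral\<^sup>L M (\<lambda>x. t n x * w x) \<le> \<alpha> r * Le_norm M E (d n) + r"
        unfolding t_def by (rule est[OF r dME])
      ultimately show "integral\<^sup>L M (\<lambda>x. t n x * w x) < a" unfolding r_def by simp
    qed
  qed
  show "loc_conv_in_measure M u f"
    unfolding loc_conv_in_measure_def
  proof (intro ballI impI allI)
    fix A \<epsilon> assume A: "A \<in> sets M" "emeasure M A < \<infinity>" and e: "(0::real) < \<epsilon>"
    define e' where "e' = min \<epsilon> (1/2)"
    have e': "0 < e'" unfolding e'_def using e by simp
    have ti: "integrable M (\<lambda>x. t n x * w x)" for n unfolding t_def by (rule int[OF dME])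
    have cw: "(\<lambda>n. emeasure M ({x \<in> space M. e' < t n x} \<inter> A)) \<longlonglongrightarrow> 0"
      by (rule conv_w[OF wm wpos tm t0 ti limI A e'])
    have sub: "{x \<in> space M. \<epsilon> < \<bar>u n x - f x\<bar>} \<inter> A \<subseteq> {x \<in> space M. e' < t n x} \<inter> A" for n
    proof
      fix x assume x: "x \<in> {x \<in> space M. \<epsilon> < \<bar>u n x - f x\<bar>} \<inter> A"
      then have "\<epsilon> < \<bar>d n x\<bar>" unfolding d_def by auto
      then have "e' < t n x" unfolding t_def e'_def by (simp add: min_def)
      then show "x \<in> {x \<in> space M. e' < t n x} \<inter> A" using x by auto
    qed
    have ts: "{x \<in> space M. e' < t n x} \<inter> A \<in> sets M" for n
    proof -
      have [measurable]: "t n \<in> borel_measurable M" by (rule tm)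
      have [measurable]: "A \<in> sets M" by (rule A(1))
      show ?thesis by measurable
    qed
    have le: "eventually (\<lambda>n. emeasure M ({x \<in> space M. \<epsilon> < \<bar>u n x - f x\<bar>} \<inter> A)
               \<le> emeasure M ({x \<in> space M. e' < t n x} \<inter> A)) sequentially"
      by (rule always_eventually, rule allI, rule emeasure_mono[OF sub ts])
    show "(\<lambda>n. emeasure M ({x \<in> space M. \<epsilon> < \<bar>u n x - f x\<bar>} \<inter> A)) \<longlonglongrightarrow> 0"
      by (rule tendsto_sandwich[OF _ le tendsto_const cw]) simp
  qed
qed


lemma TK_complete:
  fixes M :: "'a measure" and E :: "('a \<Rightarrow> real) \<Rightarrow> ennreal" and u :: "nat \<Rightarrow> 'a \<Rightarrow> real"
  assumes sf: "sigma_finite_measure M" and D: "nonlinear_dirichlet_form M E"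
    and TK: "trivial_kernel M E"
    and u: "\<And>n. u n \<in> ME M E"
    and cauchy: "\<forall>\<epsilon>>0. \<exists>K. \<forall>m\<ge>K. \<forall>n\<ge>K. Le_norm M E (\<lambda>x. u m x - u n x) < \<epsilon>"
  shows "\<exists>f \<in> ME M E. (\<lambda>n. Le_norm M E (\<lambda>x. u n x - f x)) \<longlonglongrightarrow> 0"
proof -
  from ex_w[OF sf] obtain w :: "'a \<Rightarrow> real" where adm: "admissible_weight M w" and wm: "w \<in> borel_measurable M"
    and wpos': "\<forall>x. 0 < w x" and w: "integrable M w" by blast
  have wpos: "\<And>x. 0 < w x" using wpos' by blast
  have WE: "weighted_estimate M E w 1" by (rule TK_weighted[OF sf D TK adm]) simp
  from est1[OF D WE w wpos] obtain \<alpha> :: "real \<Rightarrow> real" where \<alpha>0': "\<forall>r. 0 < r \<longrightarrow> 0 < \<alpha> r"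
    and est': "\<forall>r d. 0 < r \<longrightarrow> d \<in> ME M E \<longrightarrow>
       integral\<^sup>L M (\<lambda>x. min (\<bar>d x\<bar> / 1) 1 * w x) \<le> \<alpha> r * Le_norm M E d + r"
    and int': "\<forall>d. d \<in> ME M E \<longrightarrow> integrable M (\<lambda>x. min (\<bar>d x\<bar> / 1) 1 * w x)"
    by blast
  note \<alpha>0 = \<alpha>0'[rule_format] and est = est'[rule_format] and int = int'[rule_format]
  define K where "K \<epsilon> = (SOME K. \<forall>m\<ge>K. \<forall>n\<ge>K. Le_norm M E (\<lambda>x. u m x - u n x) < \<epsilon>)" for \<epsilon> :: real
  have Kp: "\<And>m n. K \<epsilon> \<le> m \<Longrightarrow> K \<epsilon> \<le> n \<Longrightarrow> Le_norm M E (\<lambda>x. u m x - u n x) < \<epsilon>" if e: "0 < \<epsilon>" for \<epsilon>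
  proof -
    have "\<exists>K. \<forall>m\<ge>K. \<forall>n\<ge>K. Le_norm M E (\<lambda>x. u m x - u n x) < \<epsilon>" using cauchy e by blast
    then have "\<forall>m\<ge>K \<epsilon>. \<forall>n\<ge>K \<epsilon>. Le_norm M E (\<lambda>x. u m x - u n x) < \<epsilon>"
      unfolding K_def by (rule someI_ex)
    then show "\<And>m n. K \<epsilon> \<le> m \<Longrightarrow> K \<epsilon> \<le> n \<Longrightarrow> Le_norm M E (\<lambda>x. u m x - u n x) < \<epsilon>" by blast
  qed
  define \<epsilon>s where "\<epsilon>s j = (1/2::real)^j / \<alpha> ((1/2)^j)" for j
  have \<epsilon>s0: "0 < \<epsilon>s j" for j unfolding \<epsilon>s_def using \<alpha>0[of "(1/2)^j"] by simp
  define \<sigma> where "\<sigma> j = j + (\<Sum>i\<le>j. K (\<epsilon>s i))" for j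
  have \<sigma>mono: "strict_mono \<sigma>" unfolding strict_mono_Suc_iff \<sigma>_def by simp
  have \<sigma>K: "K (\<epsilon>s j) \<le> \<sigma> j" for j
  proof -
    have "K (\<epsilon>s j) \<le> (\<Sum>i\<le>j. K (\<epsilon>s i))" by (rule member_le_sum) auto
    then show ?thesis unfolding \<sigma>_def by simp
  qed
  have \<sigma>ge: "j \<le> \<sigma> j" for j by (rule seq_suble[OF \<sigma>mono])
  have \<sigma>le: "\<sigma> j \<le> \<sigma> (Suc j)" for j using \<sigma>mono by (simp add: strict_mono_Suc_iff less_imp_le)
  define \<Delta> where "\<Delta> j x = u (\<sigma> (Suc j)) x - u (\<sigma> j) x" for j x
  have \<Delta>ME: "\<Delta> j \<in> ME M E" for j unfolding \<Delta>_def by (rule ME_diff_N[OF D u u])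
  have \<Delta>N: "Le_norm M E (\<Delta> j) < \<epsilon>s j" for j
    unfolding \<Delta>_def by (rule Kp[OF \<epsilon>s0]) (use \<sigma>K \<sigma>le order_trans in blast)+
  define T where "T j x = min (\<bar>\<Delta> j x\<bar> / 1) (1::real)" for j x
  have um: "u n \<in> borel_measurable M" for n by (rule ME_meas[OF D u])
  have \<Delta>m: "\<Delta> j \<in> borel_measurable M" for j by (rule ME_meas[OF D \<Delta>ME])
  have Tm: "T j \<in> borel_measurable M" for j
  proof -
    have [measurable]: "\<Delta> j \<in> borel_measurable M" by (rule \<Delta>m)
    show ?thesis unfolding T_def by measurable
  qed
  have T0: "0 \<le> T j x" for j x unfolding T_def by simp
  have Ti: "integrable M (\<lambda>x. T j x * w x)" for j unfolding T_def by (rule int[OF \<Delta>ME])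
  have TI: "integral\<^sup>L M (\<lambda>x. T j x * w x) \<le> 2 * (1/2)^j" for j
  proof -
    have h: "(0::real) < (1/2)^j" by simp
    have "integral\<^sup>L M (\<lambda>x. T j x * w x) \<le> \<alpha> ((1/2)^j) * Le_norm M E (\<Delta> j) + (1/2)^j"
      unfolding T_def by (rule est[OF h \<Delta>ME])
    also have "\<alpha> ((1/2)^j) * Le_norm M E (\<Delta> j) \<le> \<alpha> ((1/2)^j) * \<epsilon>s j"
      using \<Delta>N[of j] \<alpha>0[OF h] by (intro mult_left_mono) auto
    also have "\<alpha> ((1/2)^j) * \<epsilon>s j = (1/2)^j" unfolding \<epsilon>s_def using \<alpha>0[OF h] by simp
    finally show ?thesis by simp
  qed
  have TwN: "(\<lambda>x. ennreal (T j x * w x)) \<in> borel_measurable M" for j using Tm wm by measurable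
  have nnI: "(\<integral>\<^sup>+ x. ennreal (T j x * w x) \<partial>M) = ennreal (integral\<^sup>L M (\<lambda>x. T j x * w x))" for j
    by (rule nn_integral_eq_integral[OF Ti AE_I2]) (metis T0 wpos less_imp_le mult_nonneg_nonneg)
  have sumI: "(\<integral>\<^sup>+ x. (\<Sum>j. ennreal (T j x * w x)) \<partial>M) \<noteq> \<infinity>"
  proof -
    have "(\<integral>\<^sup>+ x. (\<Sum>j. ennreal (T j x * w x)) \<partial>M) = (\<Sum>j. (\<integral>\<^sup>+ x. ennreal (T j x * w x) \<partial>M))"
      by (rule nn_integral_suminf[OF TwN])
    also have "\<dots> \<le> (\<Sum>j. ennreal (2 * (1/2)^j))"
      unfolding nnI by (intro suminf_le ennreal_leI TI) auto
    also have "\<dots> = ennreal (\<Sum>j. 2 * (1/2::real)^j)"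
      by (rule suminf_ennreal2) (auto intro: summable_mult summable_geometric)
    also have "\<dots> < \<infinity>" by simp
    finally show ?thesis by simp
  qed
  have ae1: "AE x in M. (\<Sum>j. ennreal (T j x * w x)) \<noteq> \<infinity>"
    by (rule nn_integral_PInf_AE[OF _ sumI]) (use TwN in measurable)
  have conv: "AE x in M. convergent (\<lambda>j. u (\<sigma> j) x)"
    using ae1
  proof (rule eventually_mono)
    fix x assume x: "(\<Sum>j. ennreal (T j x * w x)) \<noteq> \<infinity>"
    have x': "(\<Sum>j. ennreal (T j x * w x)) \<noteq> top" using x by simp
    have s1: "summable (\<lambda>j. T j x * w x)"
      by (rule summable_suminf_not_top[OF _ x']) (metis T0 wpos less_imp_le mult_nonneg_nonneg)
    have "summable (\<lambda>j. (T j x * w x) * (1 / w x))" by (rule summable_mult2[OF s1])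
    moreover have "(\<lambda>j. (T j x * w x) * (1 / w x)) = (\<lambda>j. T j x)" using wpos[of x] by auto
    ultimately have s2: "summable (\<lambda>j. T j x)" by simp
    have "(\<lambda>j. T j x) \<longlonglongrightarrow> 0" by (rule summable_LIMSEQ_zero[OF s2])
    then have "eventually (\<lambda>j. T j x < 1) sequentially" by (rule order_tendstoD(2)) simp
    then have "eventually (\<lambda>j. \<bar>\<Delta> j x\<bar> = T j x) sequentially"
      by (rule eventually_mono) (auto simp: T_def min_def split: if_splits)
    then have "summable (\<lambda>j. \<bar>\<Delta> j x\<bar>) = summable (\<lambda>j. T j x)" by (rule summable_cong)
    then have "summable (\<lambda>j. \<bar>\<Delta> j x\<bar>)" using s2 by simp
    then have s3: "summable (\<lambda>j. \<Delta> j x)" by (rule summable_rabs_cancel)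
    have tel: "u (\<sigma> j) x = u (\<sigma> 0) x + (\<Sum>i<j. \<Delta> i x)" for j
      unfolding \<Delta>_def using sum_lessThan_telescope[of "\<lambda>i. u (\<sigma> i) x" j] by simp
    have "(\<lambda>j. u (\<sigma> 0) x + (\<Sum>i<j. \<Delta> i x)) \<longlonglongrightarrow> u (\<sigma> 0) x + (\<Sum>i. \<Delta> i x)"
      by (intro tendsto_add tendsto_const summable_LIMSEQ s3)
    moreover have eqf: "(\<lambda>j. u (\<sigma> 0) x + (\<Sum>i<j. \<Delta> i x)) = (\<lambda>j. u (\<sigma> j) x)"
      by (rule ext) (rule tel[symmetric])
    ultimately have "(\<lambda>j. u (\<sigma> j) x) \<longlonglongrightarrow> u (\<sigma> 0) x + (\<Sum>i. \<Delta> i x)" by simp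
    then show "convergent (\<lambda>j. u (\<sigma> j) x)" unfolding convergent_def by blast
  qed
  define f where "f x = lim (\<lambda>j. u (\<sigma> j) x)" for x
  have fm: "f \<in> borel_measurable M" unfolding f_def using um by measurable
  have flim: "AE x in M. (\<lambda>j. u (\<sigma> j) x) \<longlonglongrightarrow> f x"
    using conv by (rule eventually_mono) (simp add: f_def convergent_LIMSEQ_iff)
  have claim: "E_e M E (\<lambda>x. (u n x - f x) / l) \<le> 1" if e: "0 < \<epsilon>" and n: "K \<epsilon> \<le> n" and l: "\<epsilon> \<le> l" for \<epsilon> n l
  proof (rule Ee_lsc[OF sf, of "\<lambda>j x. (u n x - u (\<sigma> (j + K \<epsilon>)) x) / l"])
    have l0: "0 < l" using e l by simp
    show "(\<lambda>x. (u n x - u (\<sigma> (j + K \<epsilon>)) x) / l) \<in> borel_measurable M" for j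
      using um[of n] um[of "\<sigma> (j + K \<epsilon>)"] by measurable
    show hm: "(\<lambda>x. (u n x - f x) / l) \<in> borel_measurable M" using um[of n] fm by measurable
    show "loc_conv_in_measure M (\<lambda>j x. (u n x - u (\<sigma> (j + K \<epsilon>)) x) / l) (\<lambda>x. (u n x - f x) / l)"
    proof (rule lc_AE)
      show "(\<lambda>x. (u n x - u (\<sigma> (j + K \<epsilon>)) x) / l) \<in> borel_measurable M" for j
        using um[of n] um[of "\<sigma> (j + K \<epsilon>)"] by measurable
      show "(\<lambda>x. (u n x - f x) / l) \<in> borel_measurable M" by (rule hm)
      show "AE x in M. (\<lambda>j. (u n x - u (\<sigma> (j + K \<epsilon>)) x) / l) \<longlonglongrightarrow> (u n x - f x) / l"
        using flim
      proof (rule eventually_mono)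
        fix x assume "(\<lambda>j. u (\<sigma> j) x) \<longlonglongrightarrow> f x"
        then have "(\<lambda>j. u (\<sigma> (j + K \<epsilon>)) x) \<longlonglongrightarrow> f x" by (rule LIMSEQ_ignore_initial_segment)
        then show "(\<lambda>j. (u n x - u (\<sigma> (j + K \<epsilon>)) x) / l) \<longlonglongrightarrow> (u n x - f x) / l"
          by (intro tendsto_divide tendsto_diff tendsto_const) (use l0 in auto)
      qed
    qed
    fix j
    have "K \<epsilon> \<le> \<sigma> (j + K \<epsilon>)" using \<sigma>ge[of "j + K \<epsilon>"] by simp
    then have Nlt: "Le_norm M E (\<lambda>x. u n x - u (\<sigma> (j + K \<epsilon>)) x) < l"
      using Kp[OF e n] l by (meson less_le_trans)
    have dME: "(\<lambda>x. u n x - u (\<sigma> (j + K \<epsilon>)) x) \<in> ME M E" by (rule ME_diff_N[OF D u u])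
    have "l \<in> Sset M E (\<lambda>x. u n x - u (\<sigma> (j + K \<epsilon>)) x)" by (rule N_gt[OF D dME Nlt])
    then show "E_e M E (\<lambda>x. (u n x - u (\<sigma> (j + K \<epsilon>)) x) / l) \<le> 1" unfolding Sset_def by simp
  qed
  define g where "g x = u (K 1) x - f x" for x
  have gm: "g \<in> borel_measurable M" unfolding g_def using um[of "K 1"] fm by measurable
  have Eg: "E_e M E g \<le> 1"
  proof -
    have "(\<lambda>x. (u (K 1) x - f x) / 1) = g" unfolding g_def by simp
    then show ?thesis using claim[of 1 "K 1" 1] by simp
  qed
  have gME: "g \<in> ME M E"
    unfolding ME_def
  proof (intro CollectI conjI gm)
    show "((\<lambda>l::real. E_e M E (\<lambda>x. l * g x)) \<longlongrightarrow> 0) (at_right 0)"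
    proof (rule tendsto_sandwich[of "\<lambda>l. 0" _ _ "\<lambda>l. ennreal l"])
      show "eventually (\<lambda>l. 0 \<le> E_e M E (\<lambda>x. l * g x)) (at_right (0::real))" by simp
      have ev: "eventually (\<lambda>l::real. 0 < l \<and> l < 1) (at_right 0)"
        by (intro eventually_conj eventually_at_right_less) (simp add: eventually_at_right_field, rule exI[of _ 1], simp)
      show "eventually (\<lambda>l. E_e M E (\<lambda>x. l * g x) \<le> ennreal l) (at_right (0::real))"
        using ev
      proof (rule eventually_mono)
        fix l :: real assume l: "0 < l \<and> l < 1"
        have "E_e M E (\<lambda>x. l * g x) \<le> ennreal l * E_e M E g" by (rule Ee_star[OF D gm]) (use l in auto)
        also have "\<dots> \<le> ennreal l * 1" by (rule mult_left_mono[OF Eg]) simp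
        finally show "E_e M E (\<lambda>x. l * g x) \<le> ennreal l" by simp
      qed
      show "((\<lambda>l. 0) \<longlongrightarrow> (0::ennreal)) (at_right (0::real))" by simp
      have "((\<lambda>l::real. ennreal l) \<longlongrightarrow> ennreal 0) (at_right 0)"
        by (intro tendsto_ennrealI tendsto_ident_at)
      then show "((\<lambda>l::real. ennreal l) \<longlongrightarrow> 0) (at_right 0)" by simp
    qed
  qed
  have fME: "f \<in> ME M E"
  proof -
    have "(\<lambda>x. u (K 1) x - g x) \<in> ME M E" by (rule ME_diff_N[OF D u gME])
    moreover have "(\<lambda>x. u (K 1) x - g x) = f" unfolding g_def by simp
    ultimately show ?thesis by simp
  qed
  have dfME: "(\<lambda>x. u n x - f x) \<in> ME M E" for n by (rule ME_diff_N[OF D u fME])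
  have Nle: "Le_norm M E (\<lambda>x. u n x - f x) \<le> \<epsilon>" if e: "0 < \<epsilon>" and n: "K \<epsilon> \<le> n" for \<epsilon> n
  proof (rule N_le)
    show "0 \<le> \<epsilon>" using e by simp
    fix l assume l: "\<epsilon> < l"
    have "E_e M E (\<lambda>x. (u n x - f x) / l) \<le> 1" by (rule claim[OF e n]) (use l in simp)
    then show "l \<in> Sset M E (\<lambda>x. u n x - f x)" unfolding Sset_def using e l by simp
  qed
  have "(\<lambda>n. Le_norm M E (\<lambda>x. u n x - f x)) \<longlonglongrightarrow> 0"
  proof (rule order_tendstoI)
    fix a :: real assume a: "a < 0"
    show "eventually (\<lambda>n. a < Le_norm M E (\<lambda>x. u n x - f x)) sequentially"
      by (intro always_eventually allI less_le_trans[OF a N_nonneg'[OF D dfME]])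
  next
    fix a :: real assume a: "0 < a"
    have a2: "0 < a / 2" using a by simp
    have "eventually (\<lambda>n. K (a/2) \<le> n) sequentially" by (rule eventually_ge_at_top)
    then show "eventually (\<lambda>n. Le_norm M E (\<lambda>x. u n x - f x) < a) sequentially"
    proof (rule eventually_mono)
      fix n assume "K (a/2) \<le> n"
      then have "Le_norm M E (\<lambda>x. u n x - f x) \<le> a / 2" by (rule Nle[OF a2])
      then show "Le_norm M E (\<lambda>x. u n x - f x) < a" using a by simp
    qed
  qed
  then show ?thesis using fME by blast
qed


lemma TK_banach:
  fixes M :: "'a measure" and E :: "('a \<Rightarrow> real) \<Rightarrow> ennreal"
  assumes sf: "sigma_finite_measure M" and D: "nonlinear_dirichlet_form M E"
    and TK: "trivial_kernel M E"
  shows "is_banach M E"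
  unfolding is_banach_def Let_def
proof (intro conjI)
  show "\<forall>f\<in>ME M E. \<forall>g\<in>ME M E. (\<lambda>x. f x + g x) \<in> ME M E \<and>
      Le_norm M E (\<lambda>x. f x + g x) \<le> Le_norm M E f + Le_norm M E g"
    using ME_add_N[OF D] by blast
  show "\<forall>f\<in>ME M E. \<forall>c. (\<lambda>x. c * f x) \<in> ME M E \<and> Le_norm M E (\<lambda>x. c * f x) = \<bar>c\<bar> * Le_norm M E f"
    using ME_cmult_N[OF D] by blast
  show "\<forall>f\<in>ME M E. Le_norm M E f = 0 \<longrightarrow> (AE x in M. f x = 0)"
    using TK unfolding trivial_kernel_def by blast
  show "\<forall>u. (\<forall>n. u n \<in> ME M E) \<and> (\<forall>\<epsilon>>0. \<exists>K. \<forall>m\<ge>K. \<forall>n\<ge>K. Le_norm M E (\<lambda>x. u m x - u n x) < \<epsilon>) \<longrightarrow>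
      (\<exists>f\<in>ME M E. (\<lambda>n. Le_norm M E (\<lambda>x. u n x - f x)) \<longlonglongrightarrow> 0)"
  proof (intro allI impI, elim conjE)
    fix u :: "nat \<Rightarrow> 'a \<Rightarrow> real"
    assume u: "\<forall>n. u n \<in> ME M E"
      and c: "\<forall>\<epsilon>>0. \<exists>K. \<forall>m\<ge>K. \<forall>n\<ge>K. Le_norm M E (\<lambda>x. u m x - u n x) < \<epsilon>"
    show "\<exists>f\<in>ME M E. (\<lambda>n. Le_norm M E (\<lambda>x. u n x - f x)) \<longlonglongrightarrow> 0"
      by (rule TK_complete[OF sf D TK _ c]) (use u in blast)
  qed
qed

lemma banach_TK: "is_banach M E \<Longrightarrow> trivial_kernel M E"
  unfolding is_banach_def Let_def trivial_kernel_def by blast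

theorem theorem4p8:
  fixes M :: "'a measure" and E :: "('a \<Rightarrow> real) \<Rightarrow> ennreal"
  assumes "sigma_finite_measure M"
    and "nonlinear_dirichlet_form M E"
  shows "(trivial_kernel M E \<longleftrightarrow> is_banach M E)
       \<and> (trivial_kernel M E \<longleftrightarrow> embedding_continuous M E)
       \<and> (trivial_kernel M E \<longleftrightarrow>
            (\<exists>w p. admissible_weight M w \<and> 1 \<le> p \<and> weighted_estimate M E w p))
       \<and> (trivial_kernel M E \<longleftrightarrow>
            (\<forall>w p. admissible_weight M w \<and> 1 \<le> p \<longrightarrow> weighted_estimate M E w p))"
proof -
  note sf = assms(1) and D = assms(2)
  from ex_w[OF sf] obtain w0 :: "'a \<Rightarrow> real" where adm0: "admissible_weight M w0" by blast
  have one: "(1::real) \<le> 1" by simp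
  show ?thesis
  proof (intro conjI)
    show "trivial_kernel M E \<longleftrightarrow> is_banach M E"
      using TK_banach[OF sf D] banach_TK by blast
    show "trivial_kernel M E \<longleftrightarrow> embedding_continuous M E"
      using TK_cont[OF sf D] cont_TK[OF sf D] by blast
    show "trivial_kernel M E \<longleftrightarrow>
            (\<exists>w p. admissible_weight M w \<and> 1 \<le> p \<and> weighted_estimate M E w p)"
    proof
      assume TK: "trivial_kernel M E"
      show "\<exists>w p. admissible_weight M w \<and> 1 \<le> p \<and> weighted_estimate M E w p"
        using adm0 one TK_weighted[OF sf D TK adm0 one] by blast
    next
      assume "\<exists>w p. admissible_weight M w \<and> 1 \<le> p \<and> weighted_estimate M E w p"
      then show "trivial_kernel M E" using weighted_TK[OF D] by blast
    qed
    show "trivial_kernel M E \<longleftrightarrow>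
            (\<forall>w p. admissible_weight M w \<and> 1 \<le> p \<longrightarrow> weighted_estimate M E w p)"
    proof
      assume TK: "trivial_kernel M E"
      show "\<forall>w p. admissible_weight M w \<and> 1 \<le> p \<longrightarrow> weighted_estimate M E w p"
        using TK_weighted[OF sf D TK] by blast
    next
      assume "\<forall>w p. admissible_weight M w \<and> 1 \<le> p \<longrightarrow> weighted_estimate M E w p"
      then have "weighted_estimate M E w0 1" using adm0 by simp
      then show "trivial_kernel M E" by (rule weighted_TK[OF D adm0 one])
    qed
  qed
qed

end
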